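(* Let $\mathsf{C}$, $\Upsilon$ and $V_{\mathit{ub}}^\Upsilon$ be as in the context, with $K_{\mathit{ub}}=K$, and let $(s_1,b_1)\in S_B$ be a particle-based belief given by particles $s_E^1,\dots,s_E^{n_b}$ with weights $\kappa_1,\dots,\kappa_{n_b}$. Then: (1) $V_{\mathit{ub}}^\Upsilon(s_1,b_1)$ is the optimal value of the LP: minimise $\sum_{k\in I_{s_1}}\lambda_ky_k+\frac12(U-L)\sum_{s_E\in S_E^+}c_{s_E}$ subject to $c_{s_E}\ge|P(s_E;b_1)-\sum_{k\in I_{s_1}}\lambda_kP(s_E;b_1^k)|$ for $s_E\in S_E^+$, $\lambda_k\ge0$ and $\sum_{k\in I_{s_1}}\lambda_k=1$, where $S_E^+=\{s_E:P(s_E;b_1)+\sum_{k\in I_{s_1}}P(s_E;b_1^k)>0\}$. (2) $[TV_{\mathit{ub}}^\Upsilon](s_1,b_1)$ is the optimal value of the LP over variables $v$, $c^{a_1,s_1'}_{s_E'}$ ($(a_1,s_1')\in A_1\times S_1$, $s_E'\in S_E^{a_1,s_1'}$), $\lambda_k^{a_1,s_1'}$ ($(a_1,s_1')\in A_1\times S_1$, $k\in I_{s_1'}$), $p^{i}_{a_2}$ ($1\le i\le n_b$, $a_2\in A_2$): minimise $v$ subject to, for all $a_1\in A_1$, $s_1'\in S_1$, $s_E'\in S_E^{a_1,s_1'}$, $k\in I_{s_1'}$, $a_2\in A_2$, $1\le i\le n_b$: $v\ge\sum_{i=1}^{n_b}\sum_{a_2}\kappa_ip^i_{a_2}r((s_1,s_E^i),(a_1,a_2))+\beta\sum_{s_1'\in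 S_1}\sum_{k\in I_{s_1'}}\lambda_k^{a_1,s_1'}y_k+\frac12\beta(U-L)\sum_{s_1'\in S_1}\sum_{s_E'\in S_E^{a_1,s_1'}}c^{a_1,s_1'}_{s_E'}$; $c^{a_1,s_1'}_{s_E'}\ge\big|\sum_{i=1}^{n_b}\sum_{a_2}\kappa_ip^i_{a_2}\delta((s_1,s_E^i),(a_1,a_2))(s_1',s_E')-\sum_{k\in I_{s_1'}}\lambda_k^{a_1,s_1'}P(s_E';b_1^k)\big|$; $\sum_{k\in I_{s_1'}}\lambda_k^{a_1,s_1'}=\sum_{i=1}^{n_b}\sum_{a_2}\sum_{s_E''\in S_E}\kappa_ip^i_{a_2}\delta((s_1,s_E^i),(a_1,a_2))(s_1',s_E'')$; $\lambda_k^{a_1,s_1'}\ge0$, $p^i_{a_2}\ge0$, $\sum_{a_2\in A_2}p^i_{a_2}=1$; where $S_E^{a_1,s_1'}$ is the set of $s_E'\in S_E$ such that $\delta((s_1,s_E^i),(a_1,a_2))(s_1',s_E')>0$ for some $i$ and $a_2$, or $P(s_E';b_1^k)>0$ for some $k\in I_{s_1'}$.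
   Context: A one-sided NS-POSG $\mathsf{C}$ consists of: finite sets $\mathit{Loc}_1$, $\mathit{Per}_1$, $S_1=\mathit{Loc}_1\times\mathit{Per}_1$; a closed set $S_E\subseteq\mathbb{R}^e$; finite action sets $A_1,A_2$, $A=A_1\times A_2$; $\mathit{obs}_1:\mathit{Loc}_1\times S_E\to\mathit{Per}_1$ (arg-max of a ReLU NN classifier); $\delta_1:S_1\times A\to\mathbb{P}(\mathit{Loc}_1)$; finitely-branching $\delta_E:\mathit{Loc}_1\times S_E\times A\to\mathbb{P}(S_E)$. Semantics: the POSG with states $S$ = pairs $((\mathit{loc}_1,\mathit{per}_1),s_E)$ with $\mathit{per}_1=\mathit{obs}_1(\mathit{loc}_1,s_E)$, transition $\delta(((\mathit{loc}_1,\mathit{per}_1),s_E),a)(s_1',s_E')=\delta_1((\mathit{loc}_1,\mathit{per}_1),a)(\mathit{loc}_1')\delta_E(\mathit{loc}_1,s_E,a)(s_E')$; agent 1 observes only its agent state and own actions, agent 2 observes everything. Bounded reward $r:S\times A\to\mathbb{R}$, $\beta\in(0,1)$; agent 1 maximises, agent 2 minimises expected discounted reward. $L=\min r/(1-\beta)$, $U=\max r/(1-\beta)$. $S_E^{s_1}=\{s_E:\mathit{obs}_1(\mathit{loc}_1,s_E)=\mathit{per}_1\}$; $S_B$ = beliefs $(s_1,b_1)$ with $b_1\in\mathbb{P}(S_E)$ supported in $S_E^{s_1}$. A particle-based belief has $b_1$ a finitely supported distribution $\sum_{i=1}^{n_b}\kappa_i\,\mathrm{Dirac}(s_E^i)$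 (normalised weights $\kappa_i$); $P(s_E;b_1)$ denotes the probability of point $s_E$ under $b_1$. For particle-based beliefs, $K(b_1,b_1')=\frac12(U-L)\sum_{s_E:\,P(s_E;b_1)+P(s_E;b_1')>0}|P(s_E;b_1)-P(s_E;b_1')|$. Stage strategies $u_1\in\mathbb{P}(A_1)$, $u_2\in\mathbb{P}(A_2\mid S)$; $P(s_1'\mid(s_1,b_1),a_1,u_2)=\int b_1(s_E)\sum_{a_2}u_2(a_2\mid s_1,s_E)\sum_{s_E'}\delta((s_1,s_E),(a_1,a_2))(s_1',s_E')\,\mathrm{d}s_E$; $P(a_1,s_1'\mid(s_1,b_1),u_1,u_2)=u_1(a_1)P(s_1'\mid(s_1,b_1),a_1,u_2)$; updated belief $b_1^{s_1,a_1,u_2,s_1'}(s_E')=\big(\int b_1(s_E)\sum_{a_2}u_2(a_2\mid s_1,s_E)\delta((s_1,s_E),(a_1,a_2))(s_1',s_E')\,\mathrm{d}s_E\big)/P(s_1'\mid(s_1,b_1),a_1,u_2)$ on $S_E^{s_1'}$, $0$ elsewhere. Minimax operator: $[TV](s_1,b_1)=\max_{u_1}\min_{u_2}\big(\mathbb{E}_{(s_1,b_1),u_1,u_2}[r(s,a)]+\beta\sum_{(a_1,s_1')}P(a_1,s_1'\mid(s_1,b_1),u_1,u_2)V(s_1',b_1^{s_1,a_1,u_2,s_1'})\big)$ with $\mathbb{E}_{(s_1,b_1),u_1,u_2}[r(s,a)]=\int b_1(s_E)\sum_{(a_1,a_2)}u_1(a_1)u_2(a_2\mid s_1,s_E)r((s_1,s_E),(a_1,a_2))\,\mathrm{d}s_E$.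 Upper bound: $\Upsilon=\{((s_1^k,b_1^k),y_k):k\in I\}$ is a finite set of particle-based beliefs with real values; $I_{s_1}=\{k\in I:s_1^k=s_1\}$. For $(s_1,b_1)\in S_B$, $V_{\mathit{ub}}^\Upsilon(s_1,b_1)=\min\{\sum_{k\in I_{s_1}}\lambda_ky_k+K_{\mathit{ub}}(b_1,\sum_{k\in I_{s_1}}\lambda_kb_1^k):\lambda_k\ge0,\ \sum_{k\in I_{s_1}}\lambda_k=1\}$, here with $K_{\mathit{ub}}=K$. *)

theory Defs
  imports "HOL-Analysis.Analysis" "HOL-Probability.Probability"
begin

text \<open>Agent states are pairs (loc, per) :: 'loc \<times> 'per,
  environment states are points of (real^'d) lying in the closed set SE,
  beliefs over environment states are probability mass functions.\<close>

definition SE_of :: "(real^'d) set \<Rightarrow> ('loc \<Rightarrow> (real^'d) \<Rightarrow> 'per) \<Rightarrow> 'loc \<times> 'per \<Rightarrow> (real^'d) set" where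
  "SE_of SE obs s1 = {e \<in> SE. obs (fst s1) e = snd s1}"

definition states :: "(real^'d) set \<Rightarrow> ('loc \<Rightarrow> (real^'d) \<Rightarrow> 'per) \<Rightarrow> (('loc \<times> 'per) \<times> (real^'d)) set" where
  "states SE obs = {((l, p), e). e \<in> SE \<and> p = obs l e}"

definition deltaC :: "('loc \<Rightarrow> (real^'d) \<Rightarrow> 'per) \<Rightarrow> ('loc \<times> 'per \<Rightarrow> 'a \<Rightarrow> 'loc pmf)
    \<Rightarrow> ('loc \<Rightarrow> (real^'d) \<Rightarrow> 'a \<Rightarrow> (real^'d) pmf)
    \<Rightarrow> ('loc \<times> 'per) \<times> (real^'d) \<Rightarrow> 'a \<Rightarrow> 'loc \<times> 'per \<Rightarrow> (real^'d) \<Rightarrow> real" where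
  "deltaC obs d1 dE s a s1' e' =
     (if snd s1' = obs (fst s1') e'
      then pmf (d1 (fst s) a) (fst s1') * pmf (dE (fst (fst s)) (snd s) a) e'
      else 0)"

definition lowL :: "(('loc \<times> 'per) \<times> (real^'d)) set \<Rightarrow> (('loc \<times> 'per) \<times> (real^'d) \<Rightarrow> 'a \<Rightarrow> real) \<Rightarrow> real \<Rightarrow> real" where
  "lowL S r \<beta> = Inf (case_prod r ` (S \<times> UNIV)) / (1 - \<beta>)"

definition upU :: "(('loc \<times> 'per) \<times> (real^'d)) set \<Rightarrow> (('loc \<times> 'per) \<times> (real^'d) \<Rightarrow> 'a \<Rightarrow> real) \<Rightarrow> real \<Rightarrow> real" where
  "upU S r \<beta> = Sup (case_prod r ` (S \<times> UNIV)) / (1 - \<beta>)"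

definition Kdist :: "real \<Rightarrow> real \<Rightarrow> ('e \<Rightarrow> real) \<Rightarrow> ('e \<Rightarrow> real) \<Rightarrow> real" where
  "Kdist L U f g = (U - L) / 2 * (\<Sum>x\<in>{x. f x + g x > 0}. \<bar>f x - g x\<bar>)"

definition Iof :: "'k set \<Rightarrow> ('k \<Rightarrow> 's) \<Rightarrow> 's \<Rightarrow> 'k set" where
  "Iof I s1k s1 = {k \<in> I. s1k k = s1}"

text \<open>Upper bound V_ub^Upsilon(s1, b1), with K_ub = K; the belief b1 is given by its mass function.
  Upsilon = {((s1k k, bk k), y k) : k \<in> I}.\<close>
definition Vub :: "real \<Rightarrow> real \<Rightarrow> 'k set \<Rightarrow> ('k \<Rightarrow> 's) \<Rightarrow> ('k \<Rightarrow> 'e pmf) \<Rightarrow> ('k \<Rightarrow> real)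
    \<Rightarrow> 's \<Rightarrow> ('e \<Rightarrow> real) \<Rightarrow> real" where
  "Vub L U I s1k bk y s1 f =
     Inf {(\<Sum>k\<in>Iof I s1k s1. lam k * y k)
            + Kdist L U f (\<lambda>x. \<Sum>k\<in>Iof I s1k s1. lam k * pmf (bk k) x)
          | lam. (\<forall>k\<in>Iof I s1k s1. lam k \<ge> 0) \<and> (\<Sum>k\<in>Iof I s1k s1. lam k) = 1}"

definition Pnext :: "(real^'d) set \<Rightarrow> ('loc \<Rightarrow> (real^'d) \<Rightarrow> 'per) \<Rightarrow> ('loc \<times> 'per \<Rightarrow> 'a1 \<times> 'a2::finite \<Rightarrow> 'loc pmf)
    \<Rightarrow> ('loc \<Rightarrow> (real^'d) \<Rightarrow> 'a1 \<times> 'a2 \<Rightarrow> (real^'d) pmf)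
    \<Rightarrow> 'loc \<times> 'per \<Rightarrow> (real^'d) pmf \<Rightarrow> 'a1 \<Rightarrow> (('loc \<times> 'per) \<times> (real^'d) \<Rightarrow> 'a2 pmf) \<Rightarrow> 'loc \<times> 'per \<Rightarrow> real" where
  "Pnext SE obs d1 dE s1 b1 a1 u2 s1' =
     measure_pmf.expectation b1 (\<lambda>e. \<Sum>a2\<in>UNIV. pmf (u2 (s1, e)) a2 *
        (\<Sum>\<^sub>\<infinity>e'\<in>SE. deltaC obs d1 dE (s1, e) (a1, a2) s1' e'))"

definition bupd :: "(real^'d) set \<Rightarrow> ('loc \<Rightarrow> (real^'d) \<Rightarrow> 'per) \<Rightarrow> ('loc \<times> 'per \<Rightarrow> 'a1 \<times> 'a2::finite \<Rightarrow> 'loc pmf)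
    \<Rightarrow> ('loc \<Rightarrow> (real^'d) \<Rightarrow> 'a1 \<times> 'a2 \<Rightarrow> (real^'d) pmf)
    \<Rightarrow> 'loc \<times> 'per \<Rightarrow> (real^'d) pmf \<Rightarrow> 'a1 \<Rightarrow> (('loc \<times> 'per) \<times> (real^'d) \<Rightarrow> 'a2 pmf) \<Rightarrow> 'loc \<times> 'per
    \<Rightarrow> (real^'d) \<Rightarrow> real" where
  "bupd SE obs d1 dE s1 b1 a1 u2 s1' = (\<lambda>x.
     if x \<in> SE_of SE obs s1'
     then measure_pmf.expectation b1 (\<lambda>e. \<Sum>a2\<in>UNIV. pmf (u2 (s1, e)) a2 *
             deltaC obs d1 dE (s1, e) (a1, a2) s1' x)
          / Pnext SE obs d1 dE s1 b1 a1 u2 s1'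
     else 0)"

text \<open>Minimax operator [TV](s1, b1); max/min rendered as Sup/Inf over stage strategies.\<close>
definition Top :: "(real^'d) set \<Rightarrow> ('loc \<Rightarrow> (real^'d) \<Rightarrow> 'per) \<Rightarrow> ('loc \<times> 'per \<Rightarrow> 'a1::finite \<times> 'a2::finite \<Rightarrow> 'loc pmf)
    \<Rightarrow> ('loc \<Rightarrow> (real^'d) \<Rightarrow> 'a1 \<times> 'a2 \<Rightarrow> (real^'d) pmf)
    \<Rightarrow> (('loc \<times> 'per) \<times> (real^'d) \<Rightarrow> 'a1 \<times> 'a2 \<Rightarrow> real) \<Rightarrow> real
    \<Rightarrow> ('loc::finite \<times> 'per::finite \<Rightarrow> ((real^'d) \<Rightarrow> real) \<Rightarrow> real)
    \<Rightarrow> 'loc \<times> 'per \<Rightarrow> (real^'d) pmf \<Rightarrow> real" where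
  "Top SE obs d1 dE r \<beta> V s1 b1 =
     (SUP u1 \<in> (UNIV :: 'a1 pmf set). INF u2 \<in> (UNIV :: (('loc \<times> 'per) \<times> (real^'d) \<Rightarrow> 'a2 pmf) set).
        measure_pmf.expectation b1 (\<lambda>e. \<Sum>a\<in>UNIV. pmf u1 (fst a) * pmf (u2 (s1, e)) (snd a) * r (s1, e) a)
        + \<beta> * (\<Sum>a1\<in>UNIV. \<Sum>s1'\<in>UNIV. pmf u1 a1 * Pnext SE obs d1 dE s1 b1 a1 u2 s1'
                      * V s1' (bupd SE obs d1 dE s1 b1 a1 u2 s1')))"

end

theory Submission
  imports Defs
begin

lemma mix_strict:
  fixes u v x x' y y' :: real
  assumes "0 \<le> u" "0 \<le> v" "u + v = 1" "x' < x" "y' < y"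
  shows "u * x' + v * y' < u * x + v * y"
proof (cases "u = 0")
  case True then show ?thesis using assms by simp
next
  case False then have "u > 0" using assms by simp
  then have "u * x' < u * x" using assms by simp
  moreover have "v * y' \<le> v * y" using assms by (simp add: mult_left_mono)
  ultimately show ?thesis by simp
qed

lemma minimax_fin:
  fixes G :: "'p \<Rightarrow> 'a::finite \<Rightarrow> real" and P :: "'p set"
  assumes ne: "P \<noteq> {}"
    and conv: "\<And>p q \<theta>. p\<in>P \<Longrightarrow> q\<in>P \<Longrightarrow> 0\<le>\<theta> \<Longrightarrow> \<theta>\<le>1 \<Longrightarrow> \<exists>r\<in>P. \<forall>a. G r a \<le> \<theta> * G p a + (1-\<theta>) * G q a"
    and lb0: "\<And>p a. p\<in>P \<Longrightarrow> Bf a \<le> G p a"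
  shows "(SUP u\<in>(UNIV::'a pmf set). INF p\<in>P. \<Sum>a\<in>UNIV. pmf u a * G p a) = (INF p\<in>P. Max (range (G p)))"
proof -
  define B where "B = Min (range Bf)"
  have lb: "B \<le> G p a" if "p \<in> P" for p a
    using lb0[OF that, of a] unfolding B_def by (meson Min_le finite finite_imageI order_trans rangeI)
  define T where "T = (INF p\<in>P. Max (range (G p)))"
  have MaxG: "G p a \<le> Max (range (G p))" for p a by simp
  have bddT: "bdd_below ((\<lambda>p. Max (range (G p))) ` P)"
    by (rule bdd_belowI2[where m=B]) (meson MaxG lb order_trans)
  have Tle: "T \<le> Max (range (G p))" if "p\<in>P" for p
    unfolding T_def using bddT that by (rule cINF_lower)
  have spmf: "(\<Sum>a\<in>UNIV. pmf u a) = 1" for u :: "'a pmf"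
    by (rule sum_pmf_eq_1) auto
  have sum_le: "(\<Sum>a\<in>UNIV. pmf u a * G p a) \<le> Max (range (G p))" for u p
  proof -
    have "(\<Sum>a\<in>UNIV. pmf u a * G p a) \<le> (\<Sum>a\<in>UNIV. pmf u a * Max (range (G p)))"
      by (intro sum_mono mult_left_mono) (auto simp: pmf_nonneg)
    also have "\<dots> = Max (range (G p))" by (simp add: sum_distrib_right[symmetric] spmf)
    finally show ?thesis .
  qed
  have sum_ge: "B \<le> (\<Sum>a\<in>UNIV. pmf u a * G p a)" if "p\<in>P" for u p
  proof -
    have "B = (\<Sum>a\<in>UNIV. pmf u a * B)" by (simp add: sum_distrib_right[symmetric] spmf)
    also have "\<dots> \<le> (\<Sum>a\<in>UNIV. pmf u a * G p a)"
      by (intro sum_mono mult_left_mono) (auto simp: pmf_nonneg lb that)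
    finally show ?thesis .
  qed
  have upper: "(INF p\<in>P. \<Sum>a\<in>UNIV. pmf u a * G p a) \<le> T" for u
    unfolding T_def
  proof (rule cINF_mono[OF ne])
    show "bdd_below ((\<lambda>p. \<Sum>a\<in>UNIV. pmf u a * G p a) ` P)"
      by (rule bdd_belowI2[where m=B]) (rule sum_ge)
    show "\<exists>n\<in>P. (\<Sum>a\<in>UNIV. pmf u a * G n a) \<le> Max (range (G m))" if "m \<in> P" for m
      using that sum_le by blast
  qed
  define S where "S = {z::real^'a. \<exists>p\<in>P. \<forall>a. z$a > G p a - T}"
  have convS: "convex S"
    unfolding convex_def
  proof (intro ballI allI impI)
    fix x y :: "real^'a" and u v :: real
    assume xS: "x \<in> S" and yS: "y \<in> S" and uv: "0 \<le> u" "0 \<le> v" "u + v = 1"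
    obtain p where p: "p\<in>P" "\<forall>a. x$a > G p a - T" using xS S_def by auto
    obtain q where q: "q\<in>P" "\<forall>a. y$a > G q a - T" using yS S_def by auto
    obtain r where r: "r\<in>P" "\<forall>a. G r a \<le> u * G p a + (1-u) * G q a"
      using conv[OF p(1) q(1), of u] uv by auto
    have "(u *\<^sub>R x + v *\<^sub>R y)$a > G r a - T" for a
    proof -
      have "u * (G p a - T) + v * (G q a - T) < u * x$a + v * y$a"
        using mix_strict[OF uv] p q by blast
      moreover have "G r a - T \<le> u * (G p a - T) + v * (G q a - T)"
      proof -
        have v: "v = 1 - u" using uv by simp
        have "u * (G p a - T) + v * (G q a - T) = u * G p a + (1-u) * G q a - T"
          unfolding v by (simp add: algebra_simps)
        then show ?thesis using r(2)[rule_format, of a] by simp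
      qed
      ultimately show ?thesis by simp
    qed
    then show "u *\<^sub>R x + v *\<^sub>R y \<in> S" using r(1) S_def by auto
  qed
  have notin: "0 \<notin> S"
  proof
    assume "0 \<in> S"
    then obtain p where p: "p\<in>P" "\<forall>a. G p a < T" unfolding S_def by auto
    have "Max (range (G p)) \<in> range (G p)" by (rule Max_in) auto
    then obtain a where "Max (range (G p)) = G p a" by (metis imageE)
    then show False using p Tle[OF p(1)] by (metis not_le)
  qed
  obtain w where w0: "w \<noteq> 0" and wS: "\<forall>x\<in>S. 0 \<le> inner w x"
    using separating_hyperplane_set_0[OF convS notin] by blast
  obtain p0 where p0: "p0 \<in> P" using ne by auto
  have wnn: "w$a \<ge> 0" for a
  proof (rule ccontr)
    assume "\<not> w$a \<ge> 0"
    then have neg: "w$a < 0" by simp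
    define K where "K = (\<Sum>b\<in>UNIV. w$b * (G p0 b - T + 1))"
    define t where "t = (\<bar>K\<bar> + 1) / (- w$a)"
    have tpos: "t \<ge> 0" using neg unfolding t_def by (intro divide_nonneg_pos) auto
    define z where "z = (\<chi> b. G p0 b - T + 1 + (if b = a then t else 0))"
    have "z \<in> S" unfolding S_def z_def using p0 tpos by (auto intro!: bexI[of _ p0])
    then have "0 \<le> inner w z" using wS by blast
    also have "inner w z = K + w$a * t"
    proof -
      have "inner w z = (\<Sum>b\<in>UNIV. w$b * (G p0 b - T + 1) + (if b = a then w$b * t else 0))"
        unfolding inner_vec_def z_def by (intro sum.cong) (auto simp: algebra_simps)
      also have "\<dots> = K + w$a * t" unfolding K_def by (simp add: sum.distrib)
      finally show ?thesis .
    qed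
    also have "w$a * t = - (\<bar>K\<bar> + 1)" using neg t_def by simp
    finally show False by simp
  qed
  define s where "s = (\<Sum>a\<in>UNIV. w$a)"
  have spos: "s > 0"
  proof -
    obtain a where "w$a \<noteq> 0" using w0 by (metis vec_eq_iff zero_index)
    then have "w$a > 0" using wnn[of a] by simp
    then show ?thesis unfolding s_def
      by (metis (no_types, lifting) UNIV_I finite sum_pos2 wnn)
  qed
  have key: "T * s \<le> (\<Sum>a\<in>UNIV. w$a * G p a)" if "p \<in> P" for p
  proof -
    define X where "X = (\<Sum>a\<in>UNIV. w$a * (G p a - T))"
    have "X + d * s \<ge> 0" if "d > 0" for d
    proof -
      have "(\<chi> b. G p b - T + d) \<in> S" unfolding S_def using \<open>p\<in>P\<close> \<open>d>0\<close> by (auto intro!: bexI[of _ p])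
      then have "0 \<le> inner w (\<chi> b. G p b - T + d)" using wS by blast
      also have "inner w (\<chi> b. G p b - T + d) = X + d * s"
        unfolding inner_vec_def X_def s_def by (simp add: algebra_simps sum.distrib[symmetric] sum_distrib_left)
      finally show ?thesis .
    qed
    then have "X \<ge> 0"
    proof -
      assume h: "\<And>d. d > 0 \<Longrightarrow> X + d * s \<ge> 0"
      show "X \<ge> 0"
      proof (rule ccontr)
        assume "\<not> X \<ge> 0"
        then have "(- X) / (2 * s) > 0" using spos by (intro divide_pos_pos) auto
        from h[OF this] spos have "X + ((- X) / (2 * s)) * s \<ge> 0" by simp
        then show False using \<open>\<not> X \<ge> 0\<close> spos by (simp add: field_simps)
      qed
    qed
    then show ?thesis unfolding X_def s_def
      by (simp add: algebra_simps sum.distrib sum_distrib_left sum_subtractf mult.commute)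
  qed
  define u where "u = embed_pmf (\<lambda>a. w$a / s)"
  have pu: "pmf u a = w$a / s" for a
    unfolding u_def
  proof (rule pmf_embed_pmf)
    show "\<And>x. 0 \<le> w $ x / s" using wnn spos by simp
    have "(\<integral>\<^sup>+ x. ennreal (w $ x / s) \<partial>count_space UNIV) = (\<Sum>x\<in>UNIV. ennreal (w $ x / s))"
      by (simp add: nn_integral_count_space_finite)
    also have "\<dots> = ennreal (\<Sum>x\<in>UNIV. w $ x / s)"
      using wnn spos by (intro sum_ennreal) simp
    also have "(\<Sum>x\<in>UNIV. w $ x / s) = 1" using spos by (simp add: sum_divide_distrib[symmetric] s_def)
    finally show "(\<integral>\<^sup>+ x. ennreal (w $ x / s) \<partial>count_space UNIV) = 1" by simp
  qed
  have "T \<le> (INF p\<in>P. \<Sum>a\<in>UNIV. pmf u a * G p a)"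
  proof (rule cINF_greatest[OF ne])
    fix p assume "p \<in> P"
    have "T = T * s / s" using spos by simp
    also have "\<dots> \<le> (\<Sum>a\<in>UNIV. w$a * G p a) / s" using key[OF \<open>p\<in>P\<close>] spos by (simp add: pos_le_divide_eq)
    also have "\<dots> = (\<Sum>a\<in>UNIV. pmf u a * G p a)" by (simp add: pu sum_divide_distrib)
    finally show "T \<le> (\<Sum>a\<in>UNIV. pmf u a * G p a)" .
  qed
  also have "\<dots> \<le> (SUP u\<in>(UNIV::'a pmf set). INF p\<in>P. \<Sum>a\<in>UNIV. pmf u a * G p a)"
    by (rule cSUP_upper) (auto intro: bdd_aboveI2[where M=T] upper)
  finally have "T \<le> (SUP u\<in>(UNIV::'a pmf set). INF p\<in>P. \<Sum>a\<in>UNIV. pmf u a * G p a)" .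
  moreover have "(SUP u\<in>(UNIV::'a pmf set). INF p\<in>P. \<Sum>a\<in>UNIV. pmf u a * G p a) \<le> T"
    by (rule cSUP_least) (auto simp: upper)
  ultimately show ?thesis unfolding T_def by simp
qed

definition HS :: "real \<Rightarrow> 'k set \<Rightarrow> ('k \<Rightarrow> real) \<Rightarrow> ('k \<Rightarrow> 'e pmf) \<Rightarrow> 'e set \<Rightarrow> ('e \<Rightarrow> real) \<Rightarrow> real \<Rightarrow> real set" where
  "HS W J y bk S m M = {(\<Sum>k\<in>J. lam k * y k) + W * (\<Sum>e\<in>S. c e) | lam c.
      (\<forall>e\<in>S. c e \<ge> \<bar>m e - (\<Sum>k\<in>J. lam k * pmf (bk k) e)\<bar>) \<and> (\<forall>k\<in>J. lam k \<ge> 0) \<and> (\<Sum>k\<in>J. lam k) = M}"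

definition VS :: "real \<Rightarrow> 'k set \<Rightarrow> ('k \<Rightarrow> real) \<Rightarrow> ('k \<Rightarrow> 'e pmf) \<Rightarrow> 'e set \<Rightarrow> ('e \<Rightarrow> real) \<Rightarrow> real \<Rightarrow> real set" where
  "VS W J y bk S m M = {(\<Sum>k\<in>J. lam k * y k) + W * (\<Sum>e\<in>S. \<bar>m e - (\<Sum>k\<in>J. lam k * pmf (bk k) e)\<bar>) | lam.
      (\<forall>k\<in>J. lam k \<ge> 0) \<and> (\<Sum>k\<in>J. lam k) = M}"

lemma Inf_eq_dom:
  fixes A B :: "real set"
  assumes "\<forall>a\<in>A. \<exists>b\<in>B. b \<le> a" "\<forall>b\<in>B. \<exists>a\<in>A. a \<le> b" "bdd_below A" "bdd_below B"
  shows "Inf A = Inf B"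
proof (cases "A = {}")
  case True
  then have "B = {}" using assms(2) by auto
  then show ?thesis using True by simp
next
  case False
  then have Bne: "B \<noteq> {}" using assms(1) by auto
  have "Inf B \<le> Inf A"
    by (rule cInf_greatest[OF False]) (meson assms(1) assms(4) cInf_lower order_trans)
  moreover have "Inf A \<le> Inf B"
    by (rule cInf_greatest[OF Bne]) (meson assms(2) assms(3) cInf_lower order_trans)
  ultimately show ?thesis by simp
qed

lemma lam_lower:
  fixes lam y :: "'k \<Rightarrow> real"
  assumes "finite J" "\<forall>k\<in>J. lam k \<ge> 0"
  shows "(\<Sum>k\<in>J. lam k * y k) \<ge> - (\<Sum>k\<in>J. lam k) * (\<Sum>k\<in>J. \<bar>y k\<bar>)"
proof -
  have "(\<Sum>k\<in>J. lam k * y k) \<ge> (\<Sum>k\<in>J. - (lam k * (\<Sum>j\<in>J. \<bar>y j\<bar>)))"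
  proof (rule sum_mono)
    fix k assume k: "k \<in> J"
    have "\<bar>y k\<bar> \<le> (\<Sum>j\<in>J. \<bar>y j\<bar>)" using k assms(1)
      by (intro member_le_sum) auto
    then have "lam k * \<bar>y k\<bar> \<le> lam k * (\<Sum>j\<in>J. \<bar>y j\<bar>)" using assms(2) k by (simp add: mult_left_mono)
    moreover have "- (lam k * \<bar>y k\<bar>) \<le> lam k * y k" using assms(2) k
      by (metis abs_ge_minus_self abs_mult abs_of_nonneg minus_le_iff)
    ultimately show "- (lam k * (\<Sum>j\<in>J. \<bar>y j\<bar>)) \<le> lam k * y k" by linarith
  qed
  also have "(\<Sum>k\<in>J. - (lam k * (\<Sum>j\<in>J. \<bar>y j\<bar>))) = - (\<Sum>k\<in>J. lam k) * (\<Sum>k\<in>J. \<bar>y k\<bar>)"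
    by (simp add: sum_negf sum_distrib_right)
  finally show ?thesis .
qed

lemma HS_lower:
  assumes "finite J" "W \<ge> 0" "x \<in> HS W J y bk S m M"
  shows "x \<ge> - M * (\<Sum>k\<in>J. \<bar>y k\<bar>)"
proof -
  obtain lam c where x: "x = (\<Sum>k\<in>J. lam k * y k) + W * (\<Sum>e\<in>S. c e)"
    and c: "\<forall>e\<in>S. c e \<ge> \<bar>m e - (\<Sum>k\<in>J. lam k * pmf (bk k) e)\<bar>"
    and l: "\<forall>k\<in>J. lam k \<ge> 0" and s: "(\<Sum>k\<in>J. lam k) = M"
    using assms(3) unfolding HS_def by blast
  have "(\<Sum>e\<in>S. c e) \<ge> 0" using c by (intro sum_nonneg) (meson abs_ge_zero order_trans)
  then have "W * (\<Sum>e\<in>S. c e) \<ge> 0" using assms(2) by simp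
  moreover have "- M * (\<Sum>k\<in>J. \<bar>y k\<bar>) \<le> (\<Sum>k\<in>J. lam k * y k)"
    using lam_lower[OF assms(1) l, of y] s by simp
  ultimately show ?thesis using x by linarith
qed

lemma VS_lower:
  assumes "finite J" "W \<ge> 0" "x \<in> VS W J y bk S m M"
  shows "x \<ge> - M * (\<Sum>k\<in>J. \<bar>y k\<bar>)"
proof -
  obtain lam where x: "x = (\<Sum>k\<in>J. lam k * y k) + W * (\<Sum>e\<in>S. \<bar>m e - (\<Sum>k\<in>J. lam k * pmf (bk k) e)\<bar>)"
    and l: "\<forall>k\<in>J. lam k \<ge> 0" and s: "(\<Sum>k\<in>J. lam k) = M"
    using assms(3) unfolding VS_def by blast
  have "(\<Sum>e\<in>S. \<bar>m e - (\<Sum>k\<in>J. lam k * pmf (bk k) e)\<bar>) \<ge> 0" by (intro sum_nonneg) auto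
  then have "W * (\<Sum>e\<in>S. \<bar>m e - (\<Sum>k\<in>J. lam k * pmf (bk k) e)\<bar>) \<ge> 0" using assms(2) by simp
  moreover have "- M * (\<Sum>k\<in>J. \<bar>y k\<bar>) \<le> (\<Sum>k\<in>J. lam k * y k)"
    using lam_lower[OF assms(1) l, of y] s by simp
  ultimately show ?thesis using x by linarith
qed

lemma HS_bdd: "finite J \<Longrightarrow> W \<ge> 0 \<Longrightarrow> bdd_below (HS W J y bk S m M)"
  by (rule bdd_belowI[where m="- M * (\<Sum>k\<in>J. \<bar>y k\<bar>)"]) (rule HS_lower)

lemma VS_bdd: "finite J \<Longrightarrow> W \<ge> 0 \<Longrightarrow> bdd_below (VS W J y bk S m M)"
  by (rule bdd_belowI[where m="- M * (\<Sum>k\<in>J. \<bar>y k\<bar>)"]) (rule VS_lower)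

lemma HS_VS:
  assumes "finite J" "W \<ge> 0"
  shows "Inf (HS W J y bk S m M) = Inf (VS W J y bk S m M)"
proof (rule Inf_eq_dom[OF _ _ HS_bdd[OF assms] VS_bdd[OF assms]])
  show "\<forall>a\<in>HS W J y bk S m M. \<exists>b\<in>VS W J y bk S m M. b \<le> a"
  proof
    fix a assume "a \<in> HS W J y bk S m M"
    then obtain lam c where x: "a = (\<Sum>k\<in>J. lam k * y k) + W * (\<Sum>e\<in>S. c e)"
      and c: "\<forall>e\<in>S. c e \<ge> \<bar>m e - (\<Sum>k\<in>J. lam k * pmf (bk k) e)\<bar>"
      and l: "\<forall>k\<in>J. lam k \<ge> 0" and s: "(\<Sum>k\<in>J. lam k) = M"
      unfolding HS_def by blast
    have "(\<Sum>e\<in>S. \<bar>m e - (\<Sum>k\<in>J. lam k * pmf (bk k) e)\<bar>) \<le> (\<Sum>e\<in>S. c e)"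
      using c by (intro sum_mono) auto
    then have "(\<Sum>k\<in>J. lam k * y k) + W * (\<Sum>e\<in>S. \<bar>m e - (\<Sum>k\<in>J. lam k * pmf (bk k) e)\<bar>) \<le> a"
      using x assms(2) by (simp add: mult_left_mono)
    moreover have "(\<Sum>k\<in>J. lam k * y k) + W * (\<Sum>e\<in>S. \<bar>m e - (\<Sum>k\<in>J. lam k * pmf (bk k) e)\<bar>) \<in> VS W J y bk S m M"
      unfolding VS_def using l s by blast
    ultimately show "\<exists>b\<in>VS W J y bk S m M. b \<le> a" by blast
  qed
  show "\<forall>b\<in>VS W J y bk S m M. \<exists>a\<in>HS W J y bk S m M. a \<le> b"
  proof
    fix b assume "b \<in> VS W J y bk S m M"
    then have "b \<in> HS W J y bk S m M" unfolding VS_def HS_def by fastforce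
    then show "\<exists>a\<in>HS W J y bk S m M. a \<le> b" by blast
  qed
qed

lemma Inf_scale:
  fixes X :: "real set"
  assumes "M > 0" "X \<noteq> {}" "bdd_below X"
  shows "Inf ((\<lambda>x. M * x) ` X) = M * Inf X"
proof -
  have ne: "(\<lambda>x. M * x) ` X \<noteq> {}" using assms by simp
  have bdd: "bdd_below ((\<lambda>x. M * x) ` X)"
  proof -
    obtain b where "\<forall>x\<in>X. b \<le> x" using assms(3) unfolding bdd_below_def by blast
    then show ?thesis using assms(1) by (intro bdd_belowI[where m="M*b"]) (auto simp: mult_left_mono)
  qed
  have "M * Inf X \<le> Inf ((\<lambda>x. M * x) ` X)"
    by (rule cInf_greatest[OF ne]) (use assms cInf_lower in \<open>auto intro!: mult_left_mono\<close>)
  moreover have "Inf ((\<lambda>x. M * x) ` X) / M \<le> Inf X"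
  proof (rule cInf_greatest[OF assms(2)])
    fix x assume "x \<in> X"
    then have "Inf ((\<lambda>x. M * x) ` X) \<le> M * x" using bdd by (intro cInf_lower) auto
    then show "Inf ((\<lambda>x. M * x) ` X) / M \<le> x" using assms(1) by (simp add: divide_le_eq mult.commute)
  qed
  then have "M * Inf X \<le> Inf ((\<lambda>x. M * x) ` X)" "Inf ((\<lambda>x. M * x) ` X) \<le> M * Inf X"
    using assms(1) \<open>M * Inf X \<le> _\<close> by (auto simp: divide_le_eq mult.commute)
  then show ?thesis by simp
qed

lemma VS_hom_obj:
  fixes lam :: "'k \<Rightarrow> real"
  assumes "M > 0"
  shows "(\<Sum>k\<in>J. (M * lam k) * y k) + W * (\<Sum>e\<in>S. \<bar>m e - (\<Sum>k\<in>J. (M * lam k) * pmf (bk k) e)\<bar>)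
       = M * ((\<Sum>k\<in>J. lam k * y k) + W * (\<Sum>e\<in>S. \<bar>m e / M - (\<Sum>k\<in>J. lam k * pmf (bk k) e)\<bar>))"
proof -
  have "\<bar>m e - (\<Sum>k\<in>J. (M * lam k) * pmf (bk k) e)\<bar> = M * \<bar>m e / M - (\<Sum>k\<in>J. lam k * pmf (bk k) e)\<bar>" for e
  proof -
    have "m e - (\<Sum>k\<in>J. (M * lam k) * pmf (bk k) e) = M * (m e / M - (\<Sum>k\<in>J. lam k * pmf (bk k) e))"
      using assms by (simp add: algebra_simps sum_distrib_left)
    then show ?thesis using assms by (simp add: abs_mult)
  qed
  then show ?thesis
    by (simp add: algebra_simps sum_distrib_left)
qed

lemma VS_hom:
  assumes "M > 0" "finite J" "J \<noteq> {}" "W \<ge> 0"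
  shows "M * Inf (VS W J y bk S (\<lambda>x. m x / M) 1) = Inf (VS W J y bk S m M)"
proof -
  have eq: "VS W J y bk S m M = (\<lambda>x. M * x) ` VS W J y bk S (\<lambda>x. m x / M) 1"
  proof
    show "VS W J y bk S m M \<subseteq> (\<lambda>x. M * x) ` VS W J y bk S (\<lambda>x. m x / M) 1"
    proof
      fix x assume "x \<in> VS W J y bk S m M"
      then obtain lam where x: "x = (\<Sum>k\<in>J. lam k * y k) + W * (\<Sum>e\<in>S. \<bar>m e - (\<Sum>k\<in>J. lam k * pmf (bk k) e)\<bar>)"
        and l: "\<forall>k\<in>J. lam k \<ge> 0" and s: "(\<Sum>k\<in>J. lam k) = M"
        unfolding VS_def by blast
      define lam' where "lam' = (\<lambda>k. lam k / M)"
      have lm: "lam = (\<lambda>k. M * lam' k)" using assms(1) unfolding lam'_def by auto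
      have "x = M * ((\<Sum>k\<in>J. lam' k * y k) + W * (\<Sum>e\<in>S. \<bar>m e / M - (\<Sum>k\<in>J. lam' k * pmf (bk k) e)\<bar>))"
        using x unfolding lm using VS_hom_obj[OF assms(1)] by simp
      moreover have "(\<Sum>k\<in>J. lam' k * y k) + W * (\<Sum>e\<in>S. \<bar>m e / M - (\<Sum>k\<in>J. lam' k * pmf (bk k) e)\<bar>) \<in> VS W J y bk S (\<lambda>x. m x / M) 1"
        unfolding VS_def
      proof (intro CollectI exI conjI)
        show "\<forall>k\<in>J. 0 \<le> lam' k" using l assms(1) lam'_def by simp
        show "(\<Sum>k\<in>J. lam' k) = 1" using s assms(1) by (simp add: lam'_def sum_divide_distrib[symmetric])
      qed simp
      ultimately show "x \<in> (\<lambda>x. M * x) ` VS W J y bk S (\<lambda>x. m x / M) 1" by blast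
    qed
    show "(\<lambda>x. M * x) ` VS W J y bk S (\<lambda>x. m x / M) 1 \<subseteq> VS W J y bk S m M"
    proof
      fix x assume "x \<in> (\<lambda>x. M * x) ` VS W J y bk S (\<lambda>x. m x / M) 1"
      then obtain lam where x: "x = M * ((\<Sum>k\<in>J. lam k * y k) + W * (\<Sum>e\<in>S. \<bar>m e / M - (\<Sum>k\<in>J. lam k * pmf (bk k) e)\<bar>))"
        and l: "\<forall>k\<in>J. lam k \<ge> 0" and s: "(\<Sum>k\<in>J. lam k) = 1"
        unfolding VS_def by blast
      have "x = (\<Sum>k\<in>J. (M * lam k) * y k) + W * (\<Sum>e\<in>S. \<bar>m e - (\<Sum>k\<in>J. (M * lam k) * pmf (bk k) e)\<bar>)"
        using x by (simp add: VS_hom_obj[OF assms(1)])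
      moreover have "\<forall>k\<in>J. M * lam k \<ge> 0" using l assms(1) by simp
      moreover have "(\<Sum>k\<in>J. M * lam k) = M" using s by (simp add: sum_distrib_left[symmetric])
      ultimately have "x = (\<Sum>k\<in>J. (\<lambda>k. M * lam k) k * y k) + W * (\<Sum>e\<in>S. \<bar>m e - (\<Sum>k\<in>J. (\<lambda>k. M * lam k) k * pmf (bk k) e)\<bar>)
         \<and> (\<forall>k\<in>J. (\<lambda>k. M * lam k) k \<ge> 0) \<and> (\<Sum>k\<in>J. (\<lambda>k. M * lam k) k) = M" by simp
      then show "x \<in> VS W J y bk S m M" unfolding VS_def by (intro CollectI) (rule exI)
    qed
  qed
  obtain k0 where k0: "k0 \<in> J" using assms(3) by auto
  have ne: "VS W J y bk S (\<lambda>x. m x / M) 1 \<noteq> {}"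
  proof -
    have "(\<Sum>k\<in>J. (if k = k0 then 1 else 0) * y k) + W * (\<Sum>e\<in>S. \<bar>m e / M - (\<Sum>k\<in>J. (if k = k0 then 1 else 0) * pmf (bk k) e)\<bar>)
       \<in> VS W J y bk S (\<lambda>x. m x / M) 1"
      unfolding VS_def
    proof (intro CollectI exI conjI)
      show "\<forall>k\<in>J. 0 \<le> (if k = k0 then 1 else 0::real)" by simp
      show "(\<Sum>k\<in>J. (if k = k0 then 1 else 0::real)) = 1" using k0 assms(2) by simp
    qed simp
    then show ?thesis by blast
  qed
  show ?thesis unfolding eq
    by (rule Inf_scale[OF assms(1) ne VS_bdd[OF assms(2,4)], symmetric])
qed

lemma Kdist_S:
  assumes "finite S" "\<forall>x. f x \<ge> 0" "\<forall>x. g x \<ge> 0" "\<forall>x. x \<notin> S \<longrightarrow> f x = 0 \<and> g x = 0"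
  shows "Kdist L U f g = (U - L) / 2 * (\<Sum>x\<in>S. \<bar>f x - g x\<bar>)"
proof -
  have sub: "{x. f x + g x > 0} \<subseteq> S" using assms(4) by force
  have "(\<Sum>x\<in>{x. f x + g x > 0}. \<bar>f x - g x\<bar>) = (\<Sum>x\<in>S. \<bar>f x - g x\<bar>)"
  proof (rule sum.mono_neutral_left[OF assms(1) sub], rule ballI)
    fix x assume "x \<in> S - {x. f x + g x > 0}"
    then have "f x + g x \<le> 0" by auto
    then have "f x = 0" "g x = 0" using assms(2,3) by (smt (verit))+
    then show "\<bar>f x - g x\<bar> = 0" by simp
  qed
  then show ?thesis unfolding Kdist_def by simp
qed

lemma setcomp_cong: "(\<And>lam. P lam \<Longrightarrow> A lam = B lam) \<Longrightarrow> {A lam | lam. P lam} = {B lam | lam. P lam}"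
  by (intro Collect_cong) (metis (mono_tags, lifting))

lemma Vub_VS:
  assumes "finite S" "\<forall>x. f x \<ge> 0" "\<forall>x. x \<notin> S \<longrightarrow> f x = 0"
    and "\<forall>k\<in>Iof I s1k s. \<forall>x. x \<notin> S \<longrightarrow> pmf (bk k) x = 0"
  shows "Vub L U I s1k bk y s f = Inf (VS ((U - L) / 2) (Iof I s1k s) y bk S f 1)"
  unfolding Vub_def VS_def
proof (rule arg_cong[where f=Inf], rule setcomp_cong)
  fix lam :: "_ \<Rightarrow> real"
  assume l: "(\<forall>k\<in>Iof I s1k s. 0 \<le> lam k) \<and> sum lam (Iof I s1k s) = 1"
  have "Kdist L U f (\<lambda>x. \<Sum>k\<in>Iof I s1k s. lam k * pmf (bk k) x)
      = (U - L) / 2 * (\<Sum>x\<in>S. \<bar>f x - (\<Sum>k\<in>Iof I s1k s. lam k * pmf (bk k) x)\<bar>)"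
  proof (rule Kdist_S[OF assms(1,2)])
    show "\<forall>x. 0 \<le> (\<Sum>k\<in>Iof I s1k s. lam k * pmf (bk k) x)"
      using l by (auto intro!: sum_nonneg simp: pmf_nonneg)
    show "\<forall>x. x \<notin> S \<longrightarrow> f x = 0 \<and> (\<Sum>k\<in>Iof I s1k s. lam k * pmf (bk k) x) = 0"
      using assms(3,4) by auto
  qed
  then show "(\<Sum>k\<in>Iof I s1k s. lam k * y k) + Kdist L U f (\<lambda>x. \<Sum>k\<in>Iof I s1k s. lam k * pmf (bk k) x)
     = (\<Sum>k\<in>Iof I s1k s. lam k * y k) + (U - L) / 2 * (\<Sum>e\<in>S. \<bar>f e - (\<Sum>k\<in>Iof I s1k s. lam k * pmf (bk k) e)\<bar>)"
    by simp
qed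

lemma HS_zero:
  assumes "finite J" "W \<ge> 0" "\<forall>e\<in>S. m e = 0"
  shows "Inf (HS W J y bk S m 0) = 0"
proof (rule cInf_eq_minimum)
  show "0 \<in> HS W J y bk S m 0" unfolding HS_def
    by (rule CollectI, rule exI[of _ "\<lambda>k. 0"], rule exI[of _ "\<lambda>e. 0"]) (use assms(3) in simp)
  show "\<And>x. x \<in> HS W J y bk S m 0 \<Longrightarrow> 0 \<le> x" using HS_lower[OF assms(1,2)] by fastforce
qed

lemma HS_ne:
  assumes "M \<ge> 0" "J \<noteq> {} \<or> M = 0" "finite J"
  shows "HS W J y bk S m M \<noteq> {}"
proof -
  obtain lam :: "'a \<Rightarrow> real" where l: "\<forall>k\<in>J. lam k \<ge> 0" "(\<Sum>k\<in>J. lam k) = M"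
  proof (cases "M = 0")
    case True
    then show ?thesis using that[of "\<lambda>k. 0"] by simp
  next
    case False
    then obtain k0 where "k0 \<in> J" using assms(2) by auto
    then show ?thesis using that[of "\<lambda>k. if k = k0 then M else 0"] assms(1,3) by simp
  qed
  have "(\<Sum>k\<in>J. lam k * y k) + W * (\<Sum>e\<in>S. (\<lambda>e. \<bar>m e - (\<Sum>k\<in>J. lam k * pmf (bk k) e)\<bar>) e) \<in> HS W J y bk S m M"
    unfolding HS_def using l by blast
  then show ?thesis by blast
qed

lemma HS_Inf_lower:
  assumes "finite J" "W \<ge> 0" "HS W J y bk S m M \<noteq> {}"
  shows "Inf (HS W J y bk S m M) \<ge> - M * (\<Sum>k\<in>J. \<bar>y k\<bar>)"
  by (rule cInf_greatest[OF assms(3)]) (rule HS_lower[OF assms(1,2)])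

lemma HS_convex:
  assumes J: "finite J" and W: "W \<ge> 0" and th: "0 \<le> \<theta>" "\<theta> \<le> 1"
    and ne1: "HS W J y bk S m1 M1 \<noteq> {}" and ne2: "HS W J y bk S m2 M2 \<noteq> {}"
  shows "Inf (HS W J y bk S (\<lambda>e. \<theta> * m1 e + (1-\<theta>) * m2 e) (\<theta> * M1 + (1-\<theta>) * M2))
         \<le> \<theta> * Inf (HS W J y bk S m1 M1) + (1-\<theta>) * Inf (HS W J y bk S m2 M2)"
proof (rule field_le_epsilon)
  fix \<epsilon> :: real assume ep: "\<epsilon> > 0"
  obtain x1 where x1: "x1 \<in> HS W J y bk S m1 M1" "x1 < Inf (HS W J y bk S m1 M1) + \<epsilon>"
    using cInf_less_iff[OF ne1 HS_bdd[OF J W], of "Inf (HS W J y bk S m1 M1) + \<epsilon>"] ep by auto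
  obtain x2 where x2: "x2 \<in> HS W J y bk S m2 M2" "x2 < Inf (HS W J y bk S m2 M2) + \<epsilon>"
    using cInf_less_iff[OF ne2 HS_bdd[OF J W], of "Inf (HS W J y bk S m2 M2) + \<epsilon>"] ep by auto
  obtain lam1 c1 where e1: "x1 = (\<Sum>k\<in>J. lam1 k * y k) + W * (\<Sum>e\<in>S. c1 e)"
    and c1: "\<forall>e\<in>S. c1 e \<ge> \<bar>m1 e - (\<Sum>k\<in>J. lam1 k * pmf (bk k) e)\<bar>"
    and l1: "\<forall>k\<in>J. lam1 k \<ge> 0" and s1: "(\<Sum>k\<in>J. lam1 k) = M1"
    using x1(1) unfolding HS_def by blast
  obtain lam2 c2 where e2: "x2 = (\<Sum>k\<in>J. lam2 k * y k) + W * (\<Sum>e\<in>S. c2 e)"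
    and c2: "\<forall>e\<in>S. c2 e \<ge> \<bar>m2 e - (\<Sum>k\<in>J. lam2 k * pmf (bk k) e)\<bar>"
    and l2: "\<forall>k\<in>J. lam2 k \<ge> 0" and s2: "(\<Sum>k\<in>J. lam2 k) = M2"
    using x2(1) unfolding HS_def by blast
  define lam where "lam = (\<lambda>k. \<theta> * lam1 k + (1-\<theta>) * lam2 k)"
  define c where "c = (\<lambda>e. \<theta> * c1 e + (1-\<theta>) * c2 e)"
  have obj: "(\<Sum>k\<in>J. lam k * y k) + W * (\<Sum>e\<in>S. c e) = \<theta> * x1 + (1-\<theta>) * x2"
  proof -
    have A: "(\<Sum>k\<in>J. lam k * y k) = \<theta> * (\<Sum>k\<in>J. lam1 k * y k) + (1-\<theta>) * (\<Sum>k\<in>J. lam2 k * y k)"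
      unfolding lam_def by (simp add: distrib_right sum.distrib sum_distrib_left mult.assoc)
    have B: "(\<Sum>e\<in>S. c e) = \<theta> * (\<Sum>e\<in>S. c1 e) + (1-\<theta>) * (\<Sum>e\<in>S. c2 e)"
      unfolding c_def by (simp add: sum.distrib sum_distrib_left)
    show ?thesis unfolding A B e1 e2 by (simp add: algebra_simps)
  qed
  have cc: "\<forall>e\<in>S. c e \<ge> \<bar>(\<theta> * m1 e + (1-\<theta>) * m2 e) - (\<Sum>k\<in>J. lam k * pmf (bk k) e)\<bar>"
  proof
    fix e assume e: "e \<in> S"
    have "(\<theta> * m1 e + (1-\<theta>) * m2 e) - (\<Sum>k\<in>J. lam k * pmf (bk k) e)
        = \<theta> * (m1 e - (\<Sum>k\<in>J. lam1 k * pmf (bk k) e)) + (1-\<theta>) * (m2 e - (\<Sum>k\<in>J. lam2 k * pmf (bk k) e))"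
    proof -
      have "(\<Sum>k\<in>J. lam k * pmf (bk k) e) = \<theta> * (\<Sum>k\<in>J. lam1 k * pmf (bk k) e) + (1-\<theta>) * (\<Sum>k\<in>J. lam2 k * pmf (bk k) e)"
        unfolding lam_def by (simp add: distrib_right sum.distrib sum_distrib_left mult.assoc)
      then show ?thesis by (simp add: algebra_simps)
    qed
    also have "\<bar>\<dots>\<bar> \<le> \<theta> * \<bar>m1 e - (\<Sum>k\<in>J. lam1 k * pmf (bk k) e)\<bar> + (1-\<theta>) * \<bar>m2 e - (\<Sum>k\<in>J. lam2 k * pmf (bk k) e)\<bar>"
      using th by (intro order_trans[OF abs_triangle_ineq]) (simp add: abs_mult)
    also have "\<dots> \<le> c e" unfolding c_def using c1 c2 e th
      by (intro add_mono mult_left_mono) auto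
    finally show "c e \<ge> \<bar>(\<theta> * m1 e + (1-\<theta>) * m2 e) - (\<Sum>k\<in>J. lam k * pmf (bk k) e)\<bar>" .
  qed
  have ll: "\<forall>k\<in>J. lam k \<ge> 0" unfolding lam_def using l1 l2 th by auto
  have ss: "(\<Sum>k\<in>J. lam k) = \<theta> * M1 + (1-\<theta>) * M2"
    unfolding lam_def using s1 s2 by (simp add: sum.distrib sum_distrib_left[symmetric])
  have mem: "\<theta> * x1 + (1-\<theta>) * x2 \<in> HS W J y bk S (\<lambda>e. \<theta> * m1 e + (1-\<theta>) * m2 e) (\<theta> * M1 + (1-\<theta>) * M2)"
    unfolding HS_def by (rule CollectI, rule exI[of _ lam], rule exI[of _ c]) (use obj cc ll ss in simp)
  have "Inf (HS W J y bk S (\<lambda>e. \<theta> * m1 e + (1-\<theta>) * m2 e) (\<theta> * M1 + (1-\<theta>) * M2)) \<le> \<theta> * x1 + (1-\<theta>) * x2"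
    by (rule cInf_lower[OF mem HS_bdd[OF J W]])
  also have "\<dots> \<le> \<theta> * (Inf (HS W J y bk S m1 M1) + \<epsilon>) + (1-\<theta>) * (Inf (HS W J y bk S m2 M2) + \<epsilon>)"
    using x1(2) x2(2) th by (intro add_mono mult_left_mono) auto
  also have "\<dots> = \<theta> * Inf (HS W J y bk S m1 M1) + (1-\<theta>) * Inf (HS W J y bk S m2 M2) + \<epsilon>"
    by (simp add: algebra_simps)
  finally show "Inf (HS W J y bk S (\<lambda>e. \<theta> * m1 e + (1-\<theta>) * m2 e) (\<theta> * M1 + (1-\<theta>) * M2))
         \<le> \<theta> * Inf (HS W J y bk S m1 M1) + (1-\<theta>) * Inf (HS W J y bk S m2 M2) + \<epsilon>" .
qed

definition Lin :: "nat \<Rightarrow> (nat \<Rightarrow> real) \<Rightarrow> (nat \<Rightarrow> 'e) \<Rightarrow> (nat \<Rightarrow> 'a::finite \<Rightarrow> real) \<Rightarrow> ('e \<Rightarrow> 'a \<Rightarrow> real) \<Rightarrow> real" where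
  "Lin nb \<kappa> sE p \<Phi> = (\<Sum>i=1..nb. \<Sum>a\<in>UNIV. \<kappa> i * p i a * \<Phi> (sE i) a)"

definition PS :: "nat \<Rightarrow> (nat \<Rightarrow> 'a::finite \<Rightarrow> real) set" where
  "PS nb = {p. (\<forall>i\<in>{1..nb}. \<forall>a. p i a \<ge> 0) \<and> (\<forall>i\<in>{1..nb}. (\<Sum>a\<in>UNIV. p i a) = 1)}"

lemma PS_le1: "p \<in> PS nb \<Longrightarrow> i \<in> {1..nb} \<Longrightarrow> p i a \<le> 1"
  unfolding PS_def
  by (metis (mono_tags, lifting) UNIV_I finite mem_Collect_eq member_le_sum)

lemma Lin_nonneg:
  assumes "p \<in> PS nb" "\<forall>i\<in>{1..nb}. \<kappa> i \<ge> 0" "\<forall>i\<in>{1..nb}. \<forall>a. \<Phi> (sE i) a \<ge> 0"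
  shows "Lin nb \<kappa> sE p \<Phi> \<ge> 0"
  unfolding Lin_def using assms unfolding PS_def by (auto intro!: sum_nonneg)

lemma Lin_abs:
  assumes "p \<in> PS nb" "\<forall>i\<in>{1..nb}. \<kappa> i \<ge> 0"
  shows "\<bar>Lin nb \<kappa> sE p \<Phi>\<bar> \<le> (\<Sum>i=1..nb. \<Sum>a\<in>UNIV. \<kappa> i * \<bar>\<Phi> (sE i) a\<bar>)"
proof -
  have "\<bar>Lin nb \<kappa> sE p \<Phi>\<bar> \<le> (\<Sum>i=1..nb. \<bar>\<Sum>a\<in>UNIV. \<kappa> i * p i a * \<Phi> (sE i) a\<bar>)"
    unfolding Lin_def by (rule sum_abs)
  also have "\<dots> \<le> (\<Sum>i=1..nb. \<Sum>a\<in>UNIV. \<kappa> i * \<bar>\<Phi> (sE i) a\<bar>)"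
  proof (rule sum_mono)
    fix i assume i: "i \<in> {1..nb}"
    have "\<bar>\<Sum>a\<in>UNIV. \<kappa> i * p i a * \<Phi> (sE i) a\<bar> \<le> (\<Sum>a\<in>UNIV. \<bar>\<kappa> i * p i a * \<Phi> (sE i) a\<bar>)"
      by (rule sum_abs)
    also have "\<dots> \<le> (\<Sum>a\<in>UNIV. \<kappa> i * \<bar>\<Phi> (sE i) a\<bar>)"
    proof (rule sum_mono)
      fix a
      have "0 \<le> p i a" "p i a \<le> 1" using assms(1) i PS_le1 unfolding PS_def by auto
      then have "p i a * \<bar>\<Phi> (sE i) a\<bar> \<le> \<bar>\<Phi> (sE i) a\<bar>"
        by (simp add: mult_left_le_one_le)
      then show "\<bar>\<kappa> i * p i a * \<Phi> (sE i) a\<bar> \<le> \<kappa> i * \<bar>\<Phi> (sE i) a\<bar>"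
        using assms(2) i \<open>0 \<le> p i a\<close> by (simp add: abs_mult mult_left_mono mult.assoc)
    qed
    finally show "\<bar>\<Sum>a\<in>UNIV. \<kappa> i * p i a * \<Phi> (sE i) a\<bar> \<le> (\<Sum>a\<in>UNIV. \<kappa> i * \<bar>\<Phi> (sE i) a\<bar>)" .
  qed
  finally show ?thesis .
qed

lemma Lin_mix:
  "Lin nb \<kappa> sE (\<lambda>i a. \<theta> * p i a + (1-\<theta>) * q i a) \<Phi> = \<theta> * Lin nb \<kappa> sE p \<Phi> + (1-\<theta>) * Lin nb \<kappa> sE q \<Phi>"
proof -
  have "Lin nb \<kappa> sE (\<lambda>i a. \<theta> * p i a + (1-\<theta>) * q i a) \<Phi>
      = (\<Sum>i=1..nb. \<Sum>a\<in>UNIV. \<theta> * (\<kappa> i * p i a * \<Phi> (sE i) a) + (1-\<theta>) * (\<kappa> i * q i a * \<Phi> (sE i) a))"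
    unfolding Lin_def by (intro sum.cong refl) (simp add: algebra_simps)
  also have "\<dots> = \<theta> * Lin nb \<kappa> sE p \<Phi> + (1-\<theta>) * Lin nb \<kappa> sE q \<Phi>"
    unfolding Lin_def by (simp only: sum.distrib sum_distrib_left)
  finally show ?thesis .
qed

lemma Lin_sum:
  "Lin nb \<kappa> sE p (\<lambda>e a. \<Sum>x\<in>S. \<Phi> x e a) = (\<Sum>x\<in>S. Lin nb \<kappa> sE p (\<Phi> x))"
  unfolding Lin_def by (simp add: sum_distrib_left sum.swap[of _ S])

lemma Lin_cmult:
  "Lin nb \<kappa> sE p (\<lambda>e a. \<Phi> e a * c) = Lin nb \<kappa> sE p \<Phi> * c"
  unfolding Lin_def by (simp add: sum_distrib_right mult.assoc)

lemma Lin_agg: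
  assumes "\<forall>a. \<forall>e\<in>sE ` {1..nb}. (\<Sum>i\<in>{i\<in>{1..nb}. sE i = e}. \<kappa> i * p i a) = (\<Sum>i\<in>{i\<in>{1..nb}. sE i = e}. \<kappa> i * p' i a)"
  shows "Lin nb \<kappa> sE p \<Phi> = Lin nb \<kappa> sE p' \<Phi>"
proof -
  have g: "(\<Sum>i=1..nb. \<kappa> i * q i a * \<Phi> (sE i) a) = (\<Sum>e\<in>sE ` {1..nb}. \<Phi> e a * (\<Sum>i\<in>{i\<in>{1..nb}. sE i = e}. \<kappa> i * q i a))" for q a
  proof -
    have "(\<Sum>i=1..nb. \<kappa> i * q i a * \<Phi> (sE i) a) = (\<Sum>e\<in>sE ` {1..nb}. \<Sum>i\<in>{i\<in>{1..nb}. sE i = e}. \<kappa> i * q i a * \<Phi> (sE i) a)"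
      by (rule sum.image_gen) simp
    also have "\<dots> = (\<Sum>e\<in>sE ` {1..nb}. \<Phi> e a * (\<Sum>i\<in>{i\<in>{1..nb}. sE i = e}. \<kappa> i * q i a))"
      by (intro sum.cong refl) (auto simp: sum_distrib_left mult.commute mult.left_commute intro!: sum.cong)
    finally show ?thesis .
  qed
  have "Lin nb \<kappa> sE p \<Phi> = (\<Sum>a\<in>UNIV. \<Sum>i=1..nb. \<kappa> i * p i a * \<Phi> (sE i) a)"
    unfolding Lin_def by (rule sum.swap)
  also have "\<dots> = (\<Sum>a\<in>UNIV. \<Sum>i=1..nb. \<kappa> i * p' i a * \<Phi> (sE i) a)"
    unfolding g using assms by (intro sum.cong refl) auto
  also have "\<dots> = Lin nb \<kappa> sE p' \<Phi>"
    unfolding Lin_def by (rule sum.swap[symmetric])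
  finally show ?thesis .
qed

lemma pmf_mk:
  fixes w :: "'a::finite \<Rightarrow> real"
  assumes "\<forall>a. w a \<ge> 0" "(\<Sum>a\<in>UNIV. w a) = 1"
  shows "pmf (embed_pmf w) a = w a"
proof (rule pmf_embed_pmf)
  show "\<And>x. 0 \<le> w x" using assms by simp
  have "(\<integral>\<^sup>+ x. ennreal (w x) \<partial>count_space UNIV) = (\<Sum>x\<in>UNIV. ennreal (w x))"
    by (simp add: nn_integral_count_space_finite)
  also have "\<dots> = ennreal (\<Sum>x\<in>UNIV. w x)"
    using assms by (intro sum_ennreal) simp
  finally show "(\<integral>\<^sup>+ x. ennreal (w x) \<partial>count_space UNIV) = 1" using assms by simp
qed

lemma infsum_to_sum:
  assumes "finite S" "S \<subseteq> T" "\<forall>x\<in>T - S. f x = 0"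
  shows "infsum f T = sum f S"
proof -
  have "infsum f T = infsum f S"
    by (rule infsum_cong_neutral) (use assms in auto)
  then show ?thesis using assms(1) by simp
qed

lemma Inf_eq_eps:
  fixes A B :: "real set"
  assumes "\<forall>a\<in>A. \<exists>b\<in>B. b \<le> a" "\<forall>b\<in>B. \<forall>\<epsilon>>0. \<exists>a\<in>A. a \<le> b + \<epsilon>" "bdd_below B" "B \<noteq> {}"
  shows "Inf A = Inf B"
proof -
  obtain b0 where "b0 \<in> B" using assms(4) by auto
  then obtain a0 where "a0 \<in> A" using assms(2) by (meson zero_less_one)
  then have Ane: "A \<noteq> {}" by auto
  obtain m where m: "\<forall>b\<in>B. m \<le> b" using assms(3) unfolding bdd_below_def by auto
  have bddA: "bdd_below A"
    by (rule bdd_belowI[where m=m]) (meson assms(1) m order_trans)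
  have "Inf B \<le> Inf A"
    by (rule cInf_greatest[OF Ane]) (meson assms(1) assms(3) cInf_lower order_trans)
  moreover have "Inf A \<le> Inf B"
  proof (rule field_le_epsilon)
    fix \<epsilon> :: real assume ep: "\<epsilon> > 0"
    obtain b where b: "b \<in> B" "b < Inf B + \<epsilon>/2"
      using cInf_less_iff[OF assms(4,3), of "Inf B + \<epsilon>/2"] ep by auto
    obtain a where a: "a \<in> A" "a \<le> b + \<epsilon>/2" using assms(2) b(1) ep by (meson half_gt_zero)
    have "Inf A \<le> a" by (rule cInf_lower[OF a(1) bddA])
    then show "Inf A \<le> Inf B + \<epsilon>" using a b by linarith
  qed
  ultimately show ?thesis by simp
qed

theorem mainTheorem4:
  fixes SE :: "(real^'d) set"
    and obs :: "'loc::finite \<Rightarrow> (real^'d) \<Rightarrow> 'per::finite"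
    and d1 :: "'loc \<times> 'per \<Rightarrow> 'a1::finite \<times> 'a2::finite \<Rightarrow> 'loc pmf"
    and dE :: "'loc \<Rightarrow> (real^'d) \<Rightarrow> 'a1 \<times> 'a2 \<Rightarrow> (real^'d) pmf"
    and r :: "('loc \<times> 'per) \<times> (real^'d) \<Rightarrow> 'a1 \<times> 'a2 \<Rightarrow> real"
    and \<beta> :: real
    and I :: "'k set" and s1k :: "'k \<Rightarrow> 'loc \<times> 'per" and bk :: "'k \<Rightarrow> (real^'d) pmf"
    and y :: "'k \<Rightarrow> real"
    and s1 :: "'loc \<times> 'per" and b1 :: "(real^'d) pmf"
    and nb :: nat and sE :: "nat \<Rightarrow> (real^'d)" and \<kappa> :: "nat \<Rightarrow> real"
  defines "L \<equiv> lowL (states SE obs) r \<beta>"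
    and "U \<equiv> upU (states SE obs) r \<beta>"
    and "\<delta> \<equiv> deltaC obs d1 dE"
    and "Is \<equiv> Iof I s1k"
    and "V \<equiv> Vub (lowL (states SE obs) r \<beta>) (upU (states SE obs) r \<beta>) I s1k bk y"
    and "SEplus \<equiv> {e. pmf b1 e + (\<Sum>k\<in>Iof I s1k s1. pmf (bk k) e) > 0}"
    and "SEa \<equiv> (\<lambda>a1 s1'. {e' \<in> SE. (\<exists>i\<in>{1..nb}. \<exists>a2. deltaC obs d1 dE (s1, sE i) (a1, a2) s1' e' > 0)
                                  \<or> (\<exists>k\<in>Iof I s1k s1'. pmf (bk k) e' > 0)})"
  assumes SE_closed: "closed SE"
    and dE_fin: "\<forall>l e a. e \<in> SE \<longrightarrow> finite (set_pmf (dE l e a)) \<and> set_pmf (dE l e a) \<subseteq> SE"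
    and r_bounded: "bounded (case_prod r ` (states SE obs \<times> UNIV))"
    and \<beta>_pos: "0 < \<beta>" and \<beta>_lt1: "\<beta> < 1"
    and I_fin: "finite I"
    and Ups_beliefs: "\<forall>k\<in>I. finite (set_pmf (bk k)) \<and> set_pmf (bk k) \<subseteq> SE_of SE obs (s1k k)"
    and Ups_cover: "\<forall>s. SE_of SE obs s \<noteq> {} \<longrightarrow> Is s \<noteq> {}"
    and particles: "\<forall>i\<in>{1..nb}. 0 < \<kappa> i \<and> sE i \<in> SE"
    and weights_norm: "(\<Sum>i=1..nb. \<kappa> i) = 1"
    and b1_particles: "\<forall>x. pmf b1 x = (\<Sum>i\<in>{i\<in>{1..nb}. sE i = x}. \<kappa> i)"
    and b1_belief: "set_pmf b1 \<subseteq> SE_of SE obs s1"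
  shows "V s1 (pmf b1) =
           Inf {(\<Sum>k\<in>Is s1. lam k * y k) + (U - L) / 2 * (\<Sum>e\<in>SEplus. c e)
                | lam c. (\<forall>e\<in>SEplus. c e \<ge> \<bar>pmf b1 e - (\<Sum>k\<in>Is s1. lam k * pmf (bk k) e)\<bar>)
                         \<and> (\<forall>k\<in>Is s1. lam k \<ge> 0) \<and> (\<Sum>k\<in>Is s1. lam k) = 1}
       \<and> Top SE obs d1 dE r \<beta> V s1 b1 =
           Inf {v | v c lam p.
              (\<forall>a1. v \<ge> (\<Sum>i=1..nb. \<Sum>a2\<in>UNIV. \<kappa> i * p i a2 * r (s1, sE i) (a1, a2))
                        + \<beta> * (\<Sum>s1'\<in>UNIV. \<Sum>k\<in>Is s1'. lam a1 s1' k * y k)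
                        + \<beta> * (U - L) / 2 * (\<Sum>s1'\<in>UNIV. \<Sum>e'\<in>SEa a1 s1'. c a1 s1' e'))
            \<and> (\<forall>a1 s1'. \<forall>e'\<in>SEa a1 s1'. c a1 s1' e' \<ge>
                  \<bar>(\<Sum>i=1..nb. \<Sum>a2\<in>UNIV. \<kappa> i * p i a2 * \<delta> (s1, sE i) (a1, a2) s1' e')
                   - (\<Sum>k\<in>Is s1'. lam a1 s1' k * pmf (bk k) e')\<bar>)
            \<and> (\<forall>a1 s1'. (\<Sum>k\<in>Is s1'. lam a1 s1' k) =
                  (\<Sum>i=1..nb. \<Sum>a2\<in>UNIV. \<Sum>\<^sub>\<infinity>e''\<in>SE. \<kappa> i * p i a2 * \<delta> (s1, sE i) (a1, a2) s1' e''))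
            \<and> (\<forall>a1 s1'. \<forall>k\<in>Is s1'. lam a1 s1' k \<ge> 0)
            \<and> (\<forall>i\<in>{1..nb}. \<forall>a2. p i a2 \<ge> 0)
            \<and> (\<forall>i\<in>{1..nb}. (\<Sum>a2\<in>UNIV. p i a2) = 1)}"
proof -
  define W where "W = (U - L) / 2"
  have kpos: "\<forall>i\<in>{1..nb}. \<kappa> i \<ge> 0" using particles by auto
  have sEin: "sE i \<in> set_pmf b1" if "i \<in> {1..nb}" for i
  proof -
    have "\<kappa> i \<le> (\<Sum>j\<in>{j\<in>{1..nb}. sE j = sE i}. \<kappa> j)"
      using that kpos by (intro member_le_sum) auto
    then have "pmf b1 (sE i) > 0" using b1_particles particles that by (metis less_le_trans)
    then show ?thesis by (simp add: set_pmf_iff)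
  qed
  have setb1: "set_pmf b1 \<subseteq> sE ` {1..nb}"
  proof
    fix x assume "x \<in> set_pmf b1"
    then have "pmf b1 x \<noteq> 0" by (simp add: set_pmf_iff)
    then have "{i\<in>{1..nb}. sE i = x} \<noteq> {}" using b1_particles by (metis sum.empty)
    then show "x \<in> sE ` {1..nb}" by auto
  qed
  have finb1: "finite (set_pmf b1)" using setb1 finite_surj by blast
  have sESE: "sE i \<in> SE_of SE obs s1" if "i \<in> {1..nb}" for i using sEin[OF that] b1_belief by auto
  have Ex: "measure_pmf.expectation b1 f = (\<Sum>i=1..nb. \<kappa> i * f (sE i))" for f :: "real^'d \<Rightarrow> real"
  proof -
    have "measure_pmf.expectation b1 f = (\<Sum>x\<in>sE ` {1..nb}. f x * pmf b1 x)"
      by (rule integral_measure_pmf_real) (use setb1 in auto)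
    also have "\<dots> = (\<Sum>x\<in>sE ` {1..nb}. \<Sum>i\<in>{i\<in>{1..nb}. sE i = x}. \<kappa> i * f (sE i))"
      using b1_particles by (intro sum.cong refl) (auto simp: sum_distrib_left mult.commute intro!: sum.cong)
    also have "\<dots> = (\<Sum>i=1..nb. \<kappa> i * f (sE i))"
      by (rule sum.image_gen[symmetric]) simp
    finally show ?thesis .
  qed
  have LU: "L \<le> U"
  proof -
    define X where "X = case_prod r ` (states SE obs \<times> (UNIV :: ('a1 \<times> 'a2) set))"
    obtain e where e: "e \<in> set_pmf b1" using set_pmf_not_empty[of b1] by blast
    then have "e \<in> SE_of SE obs s1" using b1_belief by auto
    then have "(s1, e) \<in> states SE obs" unfolding SE_of_def states_def by (cases s1) auto
    then have Xne: "X \<noteq> {}" unfolding X_def by auto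
    have "Inf X \<le> Sup X"
      using Xne r_bounded unfolding X_def
      by (intro cInf_le_cSup) (auto intro: bounded_imp_bdd_above bounded_imp_bdd_below)
    then show ?thesis unfolding L_def U_def lowL_def upU_def X_def using \<beta>_lt1
      by (intro divide_right_mono) auto
  qed
  have W0: "W \<ge> 0" unfolding W_def using LU by simp
  have finIs: "finite (Is s)" for s unfolding Is_def Iof_def using I_fin by simp
  have part1: "V s1 (pmf b1) =
           Inf {(\<Sum>k\<in>Is s1. lam k * y k) + (U - L) / 2 * (\<Sum>e\<in>SEplus. c e)
                | lam c. (\<forall>e\<in>SEplus. c e \<ge> \<bar>pmf b1 e - (\<Sum>k\<in>Is s1. lam k * pmf (bk k) e)\<bar>)
                         \<and> (\<forall>k\<in>Is s1. lam k \<ge> 0) \<and> (\<Sum>k\<in>Is s1. lam k) = 1}"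
  proof -
    have finSEp: "finite SEplus"
    proof (rule finite_subset)
      show "SEplus \<subseteq> set_pmf b1 \<union> (\<Union>k\<in>Iof I s1k s1. set_pmf (bk k))"
      proof
        fix x assume x: "x \<in> SEplus"
        show "x \<in> set_pmf b1 \<union> (\<Union>k\<in>Iof I s1k s1. set_pmf (bk k))"
        proof (rule ccontr)
          assume "x \<notin> set_pmf b1 \<union> (\<Union>k\<in>Iof I s1k s1. set_pmf (bk k))"
          then have "pmf b1 x = 0" "\<forall>k\<in>Iof I s1k s1. pmf (bk k) x = 0" by (auto simp: set_pmf_iff)
          then show False using x unfolding SEplus_def by simp
        qed
      qed
      show "finite (set_pmf b1 \<union> (\<Union>k\<in>Iof I s1k s1. set_pmf (bk k)))"
        using finb1 finIs[of s1] Ups_beliefs unfolding Is_def Iof_def by auto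
    qed
    have "V s1 (pmf b1) = Inf (VS W (Is s1) y bk SEplus (pmf b1) 1)"
      unfolding V_def W_def Is_def L_def[symmetric] U_def[symmetric]
    proof (rule Vub_VS[OF finSEp])
      show "\<forall>x. 0 \<le> pmf b1 x" by simp
      show "\<forall>x. x \<notin> SEplus \<longrightarrow> pmf b1 x = 0"
      proof (intro allI impI)
        fix x assume "x \<notin> SEplus"
        then have "pmf b1 x + (\<Sum>k\<in>Iof I s1k s1. pmf (bk k) x) \<le> 0" unfolding SEplus_def by simp
        moreover have "(\<Sum>k\<in>Iof I s1k s1. pmf (bk k) x) \<ge> 0" by (simp add: sum_nonneg)
        ultimately show "pmf b1 x = 0" using pmf_nonneg[of b1 x] by linarith
      qed
      show "\<forall>k\<in>Iof I s1k s1. \<forall>x. x \<notin> SEplus \<longrightarrow> pmf (bk k) x = 0"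
      proof (intro ballI allI impI)
        fix k x assume k: "k \<in> Iof I s1k s1" and "x \<notin> SEplus"
        then have le: "pmf b1 x + (\<Sum>k\<in>Iof I s1k s1. pmf (bk k) x) \<le> 0" unfolding SEplus_def by simp
        have "pmf (bk k) x \<le> (\<Sum>k\<in>Iof I s1k s1. pmf (bk k) x)"
          using k finIs[of s1] unfolding Is_def by (intro member_le_sum) auto
        then show "pmf (bk k) x = 0" using le by (smt (verit) pmf_nonneg)
      qed
    qed
    also have "\<dots> = Inf (HS W (Is s1) y bk SEplus (pmf b1) 1)"
      by (rule HS_VS[OF finIs W0, symmetric])
    also have "\<dots> = Inf {(\<Sum>k\<in>Is s1. lam k * y k) + (U - L) / 2 * (\<Sum>e\<in>SEplus. c e)
                | lam c. (\<forall>e\<in>SEplus. c e \<ge> \<bar>pmf b1 e - (\<Sum>k\<in>Is s1. lam k * pmf (bk k) e)\<bar>)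
                         \<and> (\<forall>k\<in>Is s1. lam k \<ge> 0) \<and> (\<Sum>k\<in>Is s1. lam k) = 1}"
      unfolding HS_def W_def by (rule refl)
    finally show ?thesis .
  qed

  define PP where "PP = (PS nb :: (nat \<Rightarrow> 'a2 \<Rightarrow> real) set)"
  define mm where "mm = (\<lambda>(p :: nat \<Rightarrow> 'a2 \<Rightarrow> real) a1 s1' e'. Lin nb \<kappa> sE p (\<lambda>e a2. deltaC obs d1 dE (s1, e) (a1, a2) s1' e'))"
  define MM where "MM = (\<lambda>(p :: nat \<Rightarrow> 'a2 \<Rightarrow> real) a1 s1'. Lin nb \<kappa> sE p (\<lambda>e a2. \<Sum>e''\<in>SEa a1 s1'. deltaC obs d1 dE (s1, e) (a1, a2) s1' e''))"
  define HH where "HH = (\<lambda>p a1 s1'. Inf (HS W (Is s1') y bk (SEa a1 s1') (mm p a1 s1') (MM p a1 s1')))"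
  define Gp where "Gp = (\<lambda>p a1. Lin nb \<kappa> sE p (\<lambda>e a2. r (s1, e) (a1, a2)) + \<beta> * (\<Sum>s1'\<in>UNIV. HH p a1 s1'))"
  define pof where "pof = (\<lambda>(u2 :: ('loc \<times> 'per) \<times> (real^'d) \<Rightarrow> 'a2 pmf) i a2. pmf (u2 (s1, sE i)) a2)"
  have dnn: "deltaC obs d1 dE s a s' e' \<ge> 0" for s a s' e'
    unfolding deltaC_def by (simp add: pmf_nonneg)
  have D3: "e' \<in> SE \<and> snd s1' = obs (fst s1') e'"
    if "i \<in> {1..nb}" "deltaC obs d1 dE (s1, sE i) a s1' e' \<noteq> 0" for i a s1' e'
  proof -
    have "snd s1' = obs (fst s1') e'" using that(2) unfolding deltaC_def by (auto split: if_splits)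
    moreover have "pmf (dE (fst s1) (sE i) a) e' \<noteq> 0" using that(2) unfolding deltaC_def by (auto split: if_splits)
    then have "e' \<in> set_pmf (dE (fst s1) (sE i) a)" by (simp add: set_pmf_iff)
    then have "e' \<in> SE" using dE_fin particles that(1) by blast
    ultimately show ?thesis by simp
  qed
  have D4: "e' \<in> SEa a1 s1'"
    if "i \<in> {1..nb}" "deltaC obs d1 dE (s1, sE i) (a1, a2) s1' e' \<noteq> 0" for i a1 a2 s1' e'
  proof -
    have "deltaC obs d1 dE (s1, sE i) (a1, a2) s1' e' > 0" using that(2) dnn by (simp add: order_le_neq_trans)
    then show ?thesis unfolding SEa_def using D3[OF that] that(1) by blast
  qed
  have SEaSE: "SEa a1 s1' \<subseteq> SE" for a1 s1' unfolding SEa_def by auto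
  have finSEa: "finite (SEa a1 s1')" for a1 s1'
  proof (rule finite_subset)
    show "SEa a1 s1' \<subseteq> (\<Union>i\<in>{1..nb}. \<Union>a2. set_pmf (dE (fst s1) (sE i) (a1, a2))) \<union> (\<Union>k\<in>Iof I s1k s1'. set_pmf (bk k))"
    proof
      fix e' assume "e' \<in> SEa a1 s1'"
      then consider (a) i a2 where "i \<in> {1..nb}" "deltaC obs d1 dE (s1, sE i) (a1, a2) s1' e' > 0"
        | (b) k where "k \<in> Iof I s1k s1'" "pmf (bk k) e' > 0" unfolding SEa_def by blast
      then show "e' \<in> (\<Union>i\<in>{1..nb}. \<Union>a2. set_pmf (dE (fst s1) (sE i) (a1, a2))) \<union> (\<Union>k\<in>Iof I s1k s1'. set_pmf (bk k))"
      proof cases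
        case a
        then have "pmf (dE (fst s1) (sE i) (a1, a2)) e' \<noteq> 0" unfolding deltaC_def by (auto split: if_splits)
        then show ?thesis using a(1) by (auto simp: set_pmf_iff)
      next
        case b
        then show ?thesis by (auto simp: set_pmf_iff)
      qed
    qed
    show "finite ((\<Union>i\<in>{1..nb}. \<Union>a2. set_pmf (dE (fst s1) (sE i) (a1, a2))) \<union> (\<Union>k\<in>Iof I s1k s1'. set_pmf (bk k)))"
      using dE_fin particles Ups_beliefs finIs[of s1'] unfolding Is_def Iof_def by auto
  qed
  have D5: "(\<Sum>\<^sub>\<infinity>e''\<in>SE. c * deltaC obs d1 dE (s1, sE i) (a1, a2) s1' e'') = (\<Sum>e''\<in>SEa a1 s1'. c * deltaC obs d1 dE (s1, sE i) (a1, a2) s1' e'')"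
    if "i \<in> {1..nb}" for i a1 a2 s1' c
    by (rule infsum_to_sum[OF finSEa SEaSE]) (use D4[OF that] in fastforce)
  have D5': "(\<Sum>\<^sub>\<infinity>e''\<in>SE. deltaC obs d1 dE (s1, sE i) (a1, a2) s1' e'') = (\<Sum>e''\<in>SEa a1 s1'. deltaC obs d1 dE (s1, sE i) (a1, a2) s1' e'')"
    if "i \<in> {1..nb}" for i a1 a2 s1'
    using D5[OF that, of 1] by simp
  have D6: "MM p a1 s1' = (\<Sum>e'\<in>SEa a1 s1'. mm p a1 s1' e')" for p a1 s1'
    unfolding MM_def mm_def by (rule Lin_sum)
  have D7: "mm p a1 s1' e \<ge> 0" "MM p a1 s1' \<ge> 0" if "p \<in> PP" for p a1 s1' e
    using that unfolding PP_def mm_def MM_def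
    by (auto intro!: Lin_nonneg sum_nonneg simp: kpos dnn)
  have mm_out: "mm p a1 s1' e' = 0" if "e' \<notin> SEa a1 s1'" for p a1 s1' e'
  proof -
    have "deltaC obs d1 dE (s1, sE i) (a1, a2) s1' e' = 0" if "i \<in> {1..nb}" for i a2
      using D4[OF that] \<open>e' \<notin> SEa a1 s1'\<close> by blast
    then show ?thesis unfolding mm_def Lin_def by simp
  qed
  have D8: "Is s1' \<noteq> {}" if "MM p a1 s1' \<noteq> 0" for p a1 s1'
  proof (rule ccontr)
    assume "\<not> Is s1' \<noteq> {}"
    then have "SE_of SE obs s1' = {}" using Ups_cover by blast
    then have "deltaC obs d1 dE (s1, sE i) (a1, a2) s1' e'' = 0" if "i \<in> {1..nb}" for i a2 e''
      using D3[OF that, of "(a1, a2)" s1' e''] \<open>SE_of SE obs s1' = {}\<close> unfolding SE_of_def by (metis (mono_tags, lifting) empty_Collect_eq)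
    then have "MM p a1 s1' = 0" unfolding MM_def Lin_def by simp
    then show False using that by simp
  qed
  have D9: "HS W (Is s1') y bk (SEa a1 s1') (mm p a1 s1') (MM p a1 s1') \<noteq> {}" if "p \<in> PP" for p a1 s1'
    by (rule HS_ne[OF D7(2)[OF that] _ finIs]) (use D8 in blast)

  define Yb where "Yb = (\<Sum>k\<in>I. \<bar>y k\<bar>)"
  define Bf where "Bf = (\<lambda>a1. - (\<Sum>i=1..nb. \<Sum>a2\<in>UNIV. \<kappa> i * \<bar>r (s1, sE i) (a1, a2)\<bar>)
     - \<beta> * (\<Sum>s1'\<in>UNIV. (\<Sum>i=1..nb. \<Sum>a2\<in>UNIV. \<kappa> i * \<bar>\<Sum>e''\<in>SEa a1 s1'. deltaC obs d1 dE (s1, sE i) (a1, a2) s1' e''\<bar>) * Yb))"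
  have D10: "Gp p a1 \<ge> Bf a1" if "p \<in> PP" for p a1
  proof -
    have pP: "p \<in> PS nb" using that PP_def by simp
    have r1: "Lin nb \<kappa> sE p (\<lambda>e a2. r (s1, e) (a1, a2)) \<ge> - (\<Sum>i=1..nb. \<Sum>a2\<in>UNIV. \<kappa> i * \<bar>r (s1, sE i) (a1, a2)\<bar>)"
      using Lin_abs[OF pP kpos, of sE "\<lambda>e a2. r (s1, e) (a1, a2)"] by linarith
    have h1: "HH p a1 s1' \<ge> - ((\<Sum>i=1..nb. \<Sum>a2\<in>UNIV. \<kappa> i * \<bar>\<Sum>e''\<in>SEa a1 s1'. deltaC obs d1 dE (s1, sE i) (a1, a2) s1' e''\<bar>) * Yb)" for s1'
    proof -
      define LBD where "LBD = (\<Sum>i=1..nb. \<Sum>a2\<in>UNIV. \<kappa> i * \<bar>\<Sum>e''\<in>SEa a1 s1'. deltaC obs d1 dE (s1, sE i) (a1, a2) s1' e''\<bar>)"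
      have "HH p a1 s1' \<ge> - MM p a1 s1' * (\<Sum>k\<in>Is s1'. \<bar>y k\<bar>)"
        unfolding HH_def by (rule HS_Inf_lower[OF finIs W0 D9[OF that]])
      moreover have "MM p a1 s1' \<le> LBD"
        using Lin_abs[OF pP kpos, of sE "\<lambda>e a2. \<Sum>e''\<in>SEa a1 s1'. deltaC obs d1 dE (s1, e) (a1, a2) s1' e''"]
        unfolding MM_def LBD_def by linarith
      moreover have "(\<Sum>k\<in>Is s1'. \<bar>y k\<bar>) \<le> Yb" unfolding Yb_def Is_def Iof_def
        using I_fin by (intro sum_mono2) auto
      moreover have "0 \<le> MM p a1 s1'" by (rule D7(2)[OF that])
      moreover have "0 \<le> (\<Sum>k\<in>Is s1'. \<bar>y k\<bar>)" by (simp add: sum_nonneg)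
      ultimately have "MM p a1 s1' * (\<Sum>k\<in>Is s1'. \<bar>y k\<bar>) \<le> LBD * Yb"
        by (meson mult_mono order_trans)
      then show ?thesis using \<open>HH p a1 s1' \<ge> _\<close> unfolding LBD_def by linarith
    qed
    have sm: "(\<Sum>s1'\<in>UNIV. HH p a1 s1') \<ge> (\<Sum>s1'\<in>UNIV. - ((\<Sum>i=1..nb. \<Sum>a2\<in>UNIV. \<kappa> i * \<bar>\<Sum>e''\<in>SEa a1 s1'. deltaC obs d1 dE (s1, sE i) (a1, a2) s1' e''\<bar>) * Yb))"
      by (rule sum_mono) (rule h1)
    have "\<beta> * (\<Sum>s1'\<in>UNIV. HH p a1 s1') \<ge> - \<beta> * (\<Sum>s1'\<in>UNIV. (\<Sum>i=1..nb. \<Sum>a2\<in>UNIV. \<kappa> i * \<bar>\<Sum>e''\<in>SEa a1 s1'. deltaC obs d1 dE (s1, sE i) (a1, a2) s1' e''\<bar>) * Yb)"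
      using mult_left_mono[OF sm, of \<beta>] \<beta>_pos by (simp add: sum_negf)
    then show ?thesis using r1 unfolding Gp_def Bf_def by linarith
  qed
  have D11: "(\<lambda>i a. \<theta> * p i a + (1-\<theta>) * q i a) \<in> PP \<and>
      (\<forall>a1. Gp (\<lambda>i a. \<theta> * p i a + (1-\<theta>) * q i a) a1 \<le> \<theta> * Gp p a1 + (1-\<theta>) * Gp q a1)"
    if pq: "p \<in> PP" "q \<in> PP" and th: "0 \<le> \<theta>" "\<theta> \<le> 1" for p q \<theta>
  proof
    define pm where "pm = (\<lambda>i a. \<theta> * p i a + (1-\<theta>) * q i a)"
    show "(\<lambda>i a. \<theta> * p i a + (1-\<theta>) * q i a) \<in> PP"
      using pq th unfolding PP_def PS_def by (auto simp: sum.distrib sum_distrib_left[symmetric])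
    have mmx: "mm pm a1 s1' = (\<lambda>e. \<theta> * mm p a1 s1' e + (1-\<theta>) * mm q a1 s1' e)" for a1 s1'
      unfolding mm_def pm_def by (simp add: Lin_mix)
    have MMx: "MM pm a1 s1' = \<theta> * MM p a1 s1' + (1-\<theta>) * MM q a1 s1'" for a1 s1'
      unfolding MM_def pm_def by (simp add: Lin_mix)
    have HHx: "HH pm a1 s1' \<le> \<theta> * HH p a1 s1' + (1-\<theta>) * HH q a1 s1'" for a1 s1'
      unfolding HH_def mmx MMx by (rule HS_convex[OF finIs W0 th D9[OF pq(1)] D9[OF pq(2)]])
    show "\<forall>a1. Gp (\<lambda>i a. \<theta> * p i a + (1-\<theta>) * q i a) a1 \<le> \<theta> * Gp p a1 + (1-\<theta>) * Gp q a1"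
    proof
      fix a1
      have "(\<Sum>s1'\<in>UNIV. HH pm a1 s1') \<le> (\<Sum>s1'\<in>UNIV. \<theta> * HH p a1 s1' + (1-\<theta>) * HH q a1 s1')"
        by (rule sum_mono) (rule HHx)
      also have "\<dots> = \<theta> * (\<Sum>s1'\<in>UNIV. HH p a1 s1') + (1-\<theta>) * (\<Sum>s1'\<in>UNIV. HH q a1 s1')"
        by (simp add: sum.distrib sum_distrib_left)
      finally have "\<beta> * (\<Sum>s1'\<in>UNIV. HH pm a1 s1') \<le> \<beta> * (\<theta> * (\<Sum>s1'\<in>UNIV. HH p a1 s1') + (1-\<theta>) * (\<Sum>s1'\<in>UNIV. HH q a1 s1'))"
        using \<beta>_pos by (simp add: mult_left_mono)
      moreover have "Lin nb \<kappa> sE pm (\<lambda>e a2. r (s1, e) (a1, a2)) = \<theta> * Lin nb \<kappa> sE p (\<lambda>e a2. r (s1, e) (a1, a2)) + (1-\<theta>) * Lin nb \<kappa> sE q (\<lambda>e a2. r (s1, e) (a1, a2))"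
        unfolding pm_def by (rule Lin_mix)
      ultimately show "Gp (\<lambda>i a. \<theta> * p i a + (1-\<theta>) * q i a) a1 \<le> \<theta> * Gp p a1 + (1-\<theta>) * Gp q a1"
        unfolding Gp_def pm_def[symmetric] by (simp add: algebra_simps)
    qed
  qed
  have D12: "PP \<noteq> {}"
  proof -
    have "(\<lambda>i (a::'a2). 1 / real CARD('a2)) \<in> PP" unfolding PP_def PS_def by simp
    then show ?thesis by blast
  qed

  have T1: "pof u2 \<in> PP" for u2
    unfolding PP_def PS_def pof_def by (auto simp: pmf_nonneg intro: sum_pmf_eq_1)
  have sumUNIV: "(\<Sum>a\<in>UNIV. f a) = (\<Sum>a1\<in>UNIV. \<Sum>a2\<in>UNIV. f (a1, a2))" for f :: "'a1 \<times> 'a2 \<Rightarrow> real"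
    by (simp add: sum.cartesian_product)
  have T2a: "measure_pmf.expectation b1 (\<lambda>e. \<Sum>a\<in>UNIV. pmf u1 (fst a) * pmf (u2 (s1, e)) (snd a) * r (s1, e) a)
      = (\<Sum>a1\<in>UNIV. pmf u1 a1 * Lin nb \<kappa> sE (pof u2) (\<lambda>e a2. r (s1, e) (a1, a2)))" for u1 u2
  proof -
    have "measure_pmf.expectation b1 (\<lambda>e. \<Sum>a\<in>UNIV. pmf u1 (fst a) * pmf (u2 (s1, e)) (snd a) * r (s1, e) a)
        = (\<Sum>i=1..nb. \<kappa> i * (\<Sum>a1\<in>UNIV. \<Sum>a2\<in>UNIV. pmf u1 a1 * pof u2 i a2 * r (s1, sE i) (a1, a2)))"
      unfolding Ex pof_def by (simp add: sumUNIV)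
    also have "\<dots> = (\<Sum>i=1..nb. \<Sum>a1\<in>UNIV. pmf u1 a1 * (\<Sum>a2\<in>UNIV. \<kappa> i * pof u2 i a2 * r (s1, sE i) (a1, a2)))"
      by (simp add: sum_distrib_left mult_ac)
    also have "\<dots> = (\<Sum>a1\<in>UNIV. \<Sum>i=1..nb. pmf u1 a1 * (\<Sum>a2\<in>UNIV. \<kappa> i * pof u2 i a2 * r (s1, sE i) (a1, a2)))"
      by (rule sum.swap)
    also have "\<dots> = (\<Sum>a1\<in>UNIV. pmf u1 a1 * Lin nb \<kappa> sE (pof u2) (\<lambda>e a2. r (s1, e) (a1, a2)))"
      unfolding Lin_def by (simp add: sum_distrib_left)
    finally show ?thesis .
  qed
  have T2b: "Pnext SE obs d1 dE s1 b1 a1 u2 s1' = MM (pof u2) a1 s1'" for a1 u2 s1'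
  proof -
    have "Pnext SE obs d1 dE s1 b1 a1 u2 s1' = (\<Sum>i=1..nb. \<kappa> i * (\<Sum>a2\<in>UNIV. pof u2 i a2 *
        (\<Sum>\<^sub>\<infinity>e'\<in>SE. deltaC obs d1 dE (s1, sE i) (a1, a2) s1' e')))"
      unfolding Pnext_def Ex pof_def by simp
    also have "\<dots> = (\<Sum>i=1..nb. \<kappa> i * (\<Sum>a2\<in>UNIV. pof u2 i a2 *
        (\<Sum>e''\<in>SEa a1 s1'. deltaC obs d1 dE (s1, sE i) (a1, a2) s1' e'')))"
      by (intro sum.cong refl) (simp add: D5')
    also have "\<dots> = MM (pof u2) a1 s1'"
      unfolding MM_def Lin_def by (simp add: sum_distrib_left mult.assoc)
    finally show ?thesis .
  qed
  have T2c: "bupd SE obs d1 dE s1 b1 a1 u2 s1' = (\<lambda>x. mm (pof u2) a1 s1' x / MM (pof u2) a1 s1')" for a1 u2 s1'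
  proof
    fix x
    show "bupd SE obs d1 dE s1 b1 a1 u2 s1' x = mm (pof u2) a1 s1' x / MM (pof u2) a1 s1'"
    proof (cases "x \<in> SE_of SE obs s1'")
      case True
      have "measure_pmf.expectation b1 (\<lambda>e. \<Sum>a2\<in>UNIV. pmf (u2 (s1, e)) a2 * deltaC obs d1 dE (s1, e) (a1, a2) s1' x)
          = mm (pof u2) a1 s1' x"
        unfolding Ex mm_def Lin_def pof_def by (simp add: sum_distrib_left mult.assoc)
      then show ?thesis using True unfolding bupd_def T2b[symmetric] by simp
    next
      case False
      have "deltaC obs d1 dE (s1, sE i) (a1, a2) s1' x = 0" if "i \<in> {1..nb}" for i a2
      proof (rule ccontr)
        assume "deltaC obs d1 dE (s1, sE i) (a1, a2) s1' x \<noteq> 0"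
        from D3[OF that this] show False using False unfolding SE_of_def by auto
      qed
      then have "mm (pof u2) a1 s1' x = 0" unfolding mm_def Lin_def by simp
      then show ?thesis using False unfolding bupd_def by simp
    qed
  qed
  have T2d: "Pnext SE obs d1 dE s1 b1 a1 u2 s1' * V s1' (bupd SE obs d1 dE s1 b1 a1 u2 s1') = HH (pof u2) a1 s1'" for a1 u2 s1'
  proof -
    define p where "p = pof u2"
    define M where "M = MM p a1 s1'"
    have pP: "p \<in> PP" using T1 p_def by simp
    show ?thesis
    proof (cases "M = 0")
      case True
      have "\<forall>e\<in>SEa a1 s1'. mm p a1 s1' e = 0"
      proof -
        have "sum (mm p a1 s1') (SEa a1 s1') = 0" using D6[of p a1 s1'] True unfolding M_def by simp
        then show ?thesis using sum_nonneg_eq_0_iff[OF finSEa[of a1 s1'], of "mm p a1 s1'"] D7(1)[OF pP] by blast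
      qed
      then have "HH p a1 s1' = 0" unfolding HH_def using True M_def HS_zero[OF finIs W0] by simp
      then show ?thesis using True T2b unfolding M_def p_def by simp
    next
      case False
      then have Mpos: "M > 0" using D7(2)[OF pP, of a1 s1'] M_def by linarith
      have "V s1' (\<lambda>x. mm p a1 s1' x / M) = Inf (VS W (Is s1') y bk (SEa a1 s1') (\<lambda>x. mm p a1 s1' x / M) 1)"
        unfolding V_def W_def Is_def L_def[symmetric] U_def[symmetric]
      proof (rule Vub_VS[OF finSEa])
        show "\<forall>x. 0 \<le> mm p a1 s1' x / M" using D7(1)[OF pP] Mpos by simp
        show "\<forall>x. x \<notin> SEa a1 s1' \<longrightarrow> mm p a1 s1' x / M = 0" using mm_out by simp
        show "\<forall>k\<in>Iof I s1k s1'. \<forall>x. x \<notin> SEa a1 s1' \<longrightarrow> pmf (bk k) x = 0"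
        proof (intro ballI allI impI)
          fix k x assume k: "k \<in> Iof I s1k s1'" and x: "x \<notin> SEa a1 s1'"
          show "pmf (bk k) x = 0"
          proof (rule ccontr)
            assume ne: "pmf (bk k) x \<noteq> 0"
            then have "x \<in> set_pmf (bk k)" by (simp add: set_pmf_iff)
            then have "x \<in> SE" using Ups_beliefs k unfolding Iof_def SE_of_def by auto
            moreover have "pmf (bk k) x > 0" using ne pmf_nonneg[of "bk k" x] by linarith
            ultimately have "x \<in> SEa a1 s1'" using k unfolding SEa_def by blast
            then show False using x by simp
          qed
        qed
      qed
      then have "M * V s1' (\<lambda>x. mm p a1 s1' x / M) = Inf (VS W (Is s1') y bk (SEa a1 s1') (mm p a1 s1') M)"
        using VS_hom[OF Mpos finIs D8 W0, of p a1] False M_def by simp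
      also have "\<dots> = HH p a1 s1'"
        unfolding HH_def M_def by (rule HS_VS[OF finIs W0, symmetric])
      finally show ?thesis using T2b T2c unfolding M_def p_def by simp
    qed
  qed
  have T2: "measure_pmf.expectation b1 (\<lambda>e. \<Sum>a\<in>UNIV. pmf u1 (fst a) * pmf (u2 (s1, e)) (snd a) * r (s1, e) a)
        + \<beta> * (\<Sum>a1\<in>UNIV. \<Sum>s1'\<in>UNIV. pmf u1 a1 * Pnext SE obs d1 dE s1 b1 a1 u2 s1'
                      * V s1' (bupd SE obs d1 dE s1 b1 a1 u2 s1'))
      = (\<Sum>a1\<in>UNIV. pmf u1 a1 * Gp (pof u2) a1)" for u1 u2
  proof -
    have "(\<Sum>a1\<in>UNIV. \<Sum>s1'\<in>UNIV. pmf u1 a1 * Pnext SE obs d1 dE s1 b1 a1 u2 s1'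
                      * V s1' (bupd SE obs d1 dE s1 b1 a1 u2 s1'))
        = (\<Sum>a1\<in>UNIV. pmf u1 a1 * (\<Sum>s1'\<in>UNIV. HH (pof u2) a1 s1'))"
      by (simp add: mult.assoc T2d sum_distrib_left)
    then show ?thesis unfolding T2a Gp_def
      by (simp add: algebra_simps sum.distrib sum_distrib_left)
  qed
  have T3: "\<exists>u2. Gp (pof u2) = Gp p" if pP: "p \<in> PP" for p
  proof -
    define wt where "wt = (\<lambda>e. \<Sum>i\<in>{i\<in>{1..nb}. sE i = e}. \<kappa> i)"
    define qf where "qf = (\<lambda>e (a2::'a2). if e \<in> sE ` {1..nb}
        then (\<Sum>i\<in>{i\<in>{1..nb}. sE i = e}. \<kappa> i * p i a2) / wt e else 1 / real CARD('a2))"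
    have wtpos: "wt e > 0" if ein: "e \<in> sE ` {1..nb}" for e
    proof -
      obtain i where i: "i \<in> {1..nb}" "sE i = e" using ein by auto
      have "\<kappa> i \<le> wt e" unfolding wt_def using i kpos by (intro member_le_sum) auto
      then show ?thesis using particles i by (meson less_le_trans)
    qed
    have qnn: "\<forall>a2. qf e a2 \<ge> 0" for e
      using pP kpos wtpos unfolding qf_def PP_def PS_def by (auto intro!: divide_nonneg_pos sum_nonneg)
    have qsum: "(\<Sum>a2\<in>UNIV. qf e a2) = 1" for e
    proof (cases "e \<in> sE ` {1..nb}")
      case True
      have "(\<Sum>a2\<in>UNIV. qf e a2) = (\<Sum>a2\<in>UNIV. \<Sum>i\<in>{i\<in>{1..nb}. sE i = e}. \<kappa> i * p i a2) / wt e"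
        unfolding qf_def using True by (simp add: sum_divide_distrib)
      also have "(\<Sum>a2\<in>UNIV. \<Sum>i\<in>{i\<in>{1..nb}. sE i = e}. \<kappa> i * p i a2) = (\<Sum>i\<in>{i\<in>{1..nb}. sE i = e}. \<kappa> i * (\<Sum>a2\<in>UNIV. p i a2))"
        by (simp add: sum.swap[of _ UNIV] sum_distrib_left)
      also have "\<dots> = wt e" unfolding wt_def using pP unfolding PP_def PS_def by (intro sum.cong) auto
      finally show ?thesis using wtpos[OF True] by simp
    next
      case False
      then show ?thesis unfolding qf_def by simp
    qed
    define u2 where "u2 = (\<lambda>x :: ('loc \<times> 'per) \<times> (real^'d). embed_pmf (qf (snd x)))"
    have pu: "pof u2 i a2 = qf (sE i) a2" for i a2
      unfolding pof_def u2_def by (simp add: pmf_mk[OF qnn qsum])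
    have agg: "Lin nb \<kappa> sE (pof u2) \<Phi> = Lin nb \<kappa> sE p \<Phi>" for \<Phi>
    proof (rule Lin_agg, intro allI ballI)
      fix a2 e assume e: "e \<in> sE ` {1..nb}"
      have "(\<Sum>i\<in>{i\<in>{1..nb}. sE i = e}. \<kappa> i * pof u2 i a2) = (\<Sum>i\<in>{i\<in>{1..nb}. sE i = e}. \<kappa> i * qf e a2)"
        unfolding pu by (intro sum.cong) auto
      also have "\<dots> = wt e * qf e a2" unfolding wt_def by (simp add: sum_distrib_right)
      also have "\<dots> = (\<Sum>i\<in>{i\<in>{1..nb}. sE i = e}. \<kappa> i * p i a2)"
        unfolding qf_def using e wtpos[OF e] by simp
      finally show "(\<Sum>i\<in>{i\<in>{1..nb}. sE i = e}. \<kappa> i * pof u2 i a2) = (\<Sum>i\<in>{i\<in>{1..nb}. sE i = e}. \<kappa> i * p i a2)" .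
    qed
    have "Gp (pof u2) = Gp p" unfolding Gp_def HH_def mm_def MM_def agg ..
    then show ?thesis by blast
  qed
  define BB where "BB = (\<Sum>a1\<in>UNIV. \<bar>Bf a1\<bar>)"
  have Fbound: "(\<Sum>a1\<in>UNIV. pmf u1 a1 * Gp p a1) \<ge> - BB" if "p \<in> PP" for u1 p
  proof -
    have "(\<Sum>a1\<in>UNIV. pmf u1 a1 * Gp p a1) \<ge> (\<Sum>a1\<in>UNIV. pmf u1 a1 * (- BB))"
    proof (rule sum_mono)
      fix a1
      have "\<bar>Bf a1\<bar> \<le> BB" unfolding BB_def by (intro member_le_sum) auto
      then have "- BB \<le> Gp p a1" using D10[OF that, of a1] by linarith
      then show "pmf u1 a1 * (- BB) \<le> pmf u1 a1 * Gp p a1" by (rule mult_left_mono) (simp add: pmf_nonneg)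
    qed
    also have "(\<Sum>a1\<in>UNIV. pmf u1 a1 * (- BB)) = - BB"
    proof -
      have "(\<Sum>a1\<in>UNIV. pmf u1 a1) = 1" by (rule sum_pmf_eq_1) auto
      then show ?thesis by (simp add: sum_negf sum_distrib_right[symmetric])
    qed
    finally show ?thesis .
  qed
  have T4: "(INF u2. \<Sum>a1\<in>UNIV. pmf u1 a1 * Gp (pof u2) a1) = (INF p\<in>PP. \<Sum>a1\<in>UNIV. pmf u1 a1 * Gp p a1)" for u1
  proof (rule Inf_eq_dom)
    show "\<forall>a\<in>range (\<lambda>u2. \<Sum>a1\<in>UNIV. pmf u1 a1 * Gp (pof u2) a1). \<exists>b\<in>(\<lambda>p. \<Sum>a1\<in>UNIV. pmf u1 a1 * Gp p a1) ` PP. b \<le> a"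
      using T1 by blast
    show "\<forall>b\<in>(\<lambda>p. \<Sum>a1\<in>UNIV. pmf u1 a1 * Gp p a1) ` PP. \<exists>a\<in>range (\<lambda>u2. \<Sum>a1\<in>UNIV. pmf u1 a1 * Gp (pof u2) a1). a \<le> b"
    proof
      fix b assume "b \<in> (\<lambda>p. \<Sum>a1\<in>UNIV. pmf u1 a1 * Gp p a1) ` PP"
      then obtain p where p: "p \<in> PP" "b = (\<Sum>a1\<in>UNIV. pmf u1 a1 * Gp p a1)" by blast
      obtain u2 where "Gp (pof u2) = Gp p" using T3[OF p(1)] by blast
      then have "(\<Sum>a1\<in>UNIV. pmf u1 a1 * Gp (pof u2) a1) = b" using p(2) by simp
      then show "\<exists>a\<in>range (\<lambda>u2. \<Sum>a1\<in>UNIV. pmf u1 a1 * Gp (pof u2) a1). a \<le> b" by blast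
    qed
    show "bdd_below (range (\<lambda>u2. \<Sum>a1\<in>UNIV. pmf u1 a1 * Gp (pof u2) a1))"
      using Fbound T1 by (intro bdd_belowI2[where m="- BB"]) blast
    show "bdd_below ((\<lambda>p. \<Sum>a1\<in>UNIV. pmf u1 a1 * Gp p a1) ` PP)"
      using Fbound by (intro bdd_belowI2[where m="- BB"]) blast
  qed
  have TopEq: "Top SE obs d1 dE r \<beta> V s1 b1 = (INF p\<in>PP. Max (range (Gp p)))"
  proof -
    have "Top SE obs d1 dE r \<beta> V s1 b1 = (SUP u1\<in>(UNIV :: 'a1 pmf set). INF u2. \<Sum>a1\<in>UNIV. pmf u1 a1 * Gp (pof u2) a1)"
      unfolding Top_def T2 ..
    also have "\<dots> = (SUP u1\<in>(UNIV :: 'a1 pmf set). INF p\<in>PP. \<Sum>a1\<in>UNIV. pmf u1 a1 * Gp p a1)"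
      unfolding T4 ..
    also have "\<dots> = (INF p\<in>PP. Max (range (Gp p)))"
    proof (rule minimax_fin[OF D12])
      show "\<exists>r\<in>PP. \<forall>a. Gp r a \<le> \<theta> * Gp p a + (1 - \<theta>) * Gp q a"
        if "p \<in> PP" "q \<in> PP" "0 \<le> \<theta>" "\<theta> \<le> 1" for p q \<theta>
        using D11[OF that] by blast
      show "Bf a \<le> Gp p a" if "p \<in> PP" for p a using D10[OF that] .
    qed
    finally show ?thesis .
  qed

  have LPsum: "(\<Sum>i=1..nb. \<Sum>a2\<in>UNIV. \<Sum>\<^sub>\<infinity>e''\<in>SE. \<kappa> i * p i a2 * \<delta> (s1, sE i) (a1, a2) s1' e'') = MM p a1 s1'" for p a1 s1'
  proof -
    have "(\<Sum>i=1..nb. \<Sum>a2\<in>UNIV. \<Sum>\<^sub>\<infinity>e''\<in>SE. \<kappa> i * p i a2 * \<delta> (s1, sE i) (a1, a2) s1' e'')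
        = (\<Sum>i=1..nb. \<Sum>a2\<in>UNIV. \<Sum>e''\<in>SEa a1 s1'. \<kappa> i * p i a2 * deltaC obs d1 dE (s1, sE i) (a1, a2) s1' e'')"
      unfolding \<delta>_def by (intro sum.cong refl) (simp add: D5)
    also have "\<dots> = MM p a1 s1'" unfolding MM_def Lin_def by (simp add: sum_distrib_left)
    finally show ?thesis .
  qed
  have mm_unf: "mm p a1 s1' e' = (\<Sum>i=1..nb. \<Sum>a2\<in>UNIV. \<kappa> i * p i a2 * \<delta> (s1, sE i) (a1, a2) s1' e')" for p a1 s1' e'
    unfolding mm_def Lin_def \<delta>_def ..
  have ObjEq: "(\<Sum>i=1..nb. \<Sum>a2\<in>UNIV. \<kappa> i * p i a2 * r (s1, sE i) (a1, a2))
                        + \<beta> * (\<Sum>s1'\<in>UNIV. \<Sum>k\<in>Is s1'. lam a1 s1' k * y k)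
                        + \<beta> * (U - L) / 2 * (\<Sum>s1'\<in>UNIV. \<Sum>e'\<in>SEa a1 s1'. c a1 s1' e')
      = Lin nb \<kappa> sE p (\<lambda>e a2. r (s1, e) (a1, a2)) + \<beta> * (\<Sum>s1'\<in>UNIV. (\<Sum>k\<in>Is s1'. lam a1 s1' k * y k) + W * (\<Sum>e'\<in>SEa a1 s1'. c a1 s1' e'))"
    for p lam c a1
  proof -
    have "(\<Sum>s1'\<in>UNIV. (\<Sum>k\<in>Is s1'. lam a1 s1' k * y k) + W * (\<Sum>e'\<in>SEa a1 s1'. c a1 s1' e'))
        = (\<Sum>s1'\<in>UNIV. \<Sum>k\<in>Is s1'. lam a1 s1' k * y k) + W * (\<Sum>s1'\<in>UNIV. \<Sum>e'\<in>SEa a1 s1'. c a1 s1' e')"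
      by (simp add: sum.distrib sum_distrib_left)
    then show ?thesis unfolding Lin_def W_def by (simp add: distrib_left mult.assoc)
  qed
  define LPSET where "LPSET = {v | v c lam p.
              (\<forall>a1. v \<ge> (\<Sum>i=1..nb. \<Sum>a2\<in>UNIV. \<kappa> i * p i a2 * r (s1, sE i) (a1, a2))
                        + \<beta> * (\<Sum>s1'\<in>UNIV. \<Sum>k\<in>Is s1'. lam a1 s1' k * y k)
                        + \<beta> * (U - L) / 2 * (\<Sum>s1'\<in>UNIV. \<Sum>e'\<in>SEa a1 s1'. c a1 s1' e'))
            \<and> (\<forall>a1 s1'. \<forall>e'\<in>SEa a1 s1'. c a1 s1' e' \<ge>
                  \<bar>(\<Sum>i=1..nb. \<Sum>a2\<in>UNIV. \<kappa> i * p i a2 * \<delta> (s1, sE i) (a1, a2) s1' e')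
                   - (\<Sum>k\<in>Is s1'. lam a1 s1' k * pmf (bk k) e')\<bar>)
            \<and> (\<forall>a1 s1'. (\<Sum>k\<in>Is s1'. lam a1 s1' k) =
                  (\<Sum>i=1..nb. \<Sum>a2\<in>UNIV. \<Sum>\<^sub>\<infinity>e''\<in>SE. \<kappa> i * p i a2 * \<delta> (s1, sE i) (a1, a2) s1' e''))
            \<and> (\<forall>a1 s1'. \<forall>k\<in>Is s1'. lam a1 s1' k \<ge> 0)
            \<and> (\<forall>i\<in>{1..nb}. \<forall>a2. p i a2 \<ge> 0)
            \<and> (\<forall>i\<in>{1..nb}. (\<Sum>a2\<in>UNIV. p i a2) = 1)}"
  have LPeq: "Inf LPSET = (INF p\<in>PP. Max (range (Gp p)))"
  proof (rule Inf_eq_eps)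
    show "\<forall>a\<in>LPSET. \<exists>b\<in>(\<lambda>p. Max (range (Gp p))) ` PP. b \<le> a"
    proof
      fix a assume "a \<in> LPSET"
      then obtain v c lam p where av: "a = v"
        and C1: "\<forall>a1. v \<ge> (\<Sum>i=1..nb. \<Sum>a2\<in>UNIV. \<kappa> i * p i a2 * r (s1, sE i) (a1, a2))
                        + \<beta> * (\<Sum>s1'\<in>UNIV. \<Sum>k\<in>Is s1'. lam a1 s1' k * y k)
                        + \<beta> * (U - L) / 2 * (\<Sum>s1'\<in>UNIV. \<Sum>e'\<in>SEa a1 s1'. c a1 s1' e')"
        and C2: "\<forall>a1 s1'. \<forall>e'\<in>SEa a1 s1'. c a1 s1' e' \<ge>
                  \<bar>(\<Sum>i=1..nb. \<Sum>a2\<in>UNIV. \<kappa> i * p i a2 * \<delta> (s1, sE i) (a1, a2) s1' e')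
                   - (\<Sum>k\<in>Is s1'. lam a1 s1' k * pmf (bk k) e')\<bar>"
        and C3: "\<forall>a1 s1'. (\<Sum>k\<in>Is s1'. lam a1 s1' k) =
                  (\<Sum>i=1..nb. \<Sum>a2\<in>UNIV. \<Sum>\<^sub>\<infinity>e''\<in>SE. \<kappa> i * p i a2 * \<delta> (s1, sE i) (a1, a2) s1' e'')"
        and C4: "\<forall>a1 s1'. \<forall>k\<in>Is s1'. lam a1 s1' k \<ge> 0"
        and C5: "\<forall>i\<in>{1..nb}. \<forall>a2. p i a2 \<ge> 0"
        and C6: "\<forall>i\<in>{1..nb}. (\<Sum>a2\<in>UNIV. p i a2) = 1"
        unfolding LPSET_def by blast
      have pP: "p \<in> PP" unfolding PP_def PS_def using C5 C6 by blast
      have mem: "(\<Sum>k\<in>Is s1'. lam a1 s1' k * y k) + W * (\<Sum>e'\<in>SEa a1 s1'. c a1 s1' e')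
           \<in> HS W (Is s1') y bk (SEa a1 s1') (mm p a1 s1') (MM p a1 s1')" for a1 s1'
      proof -
        have "\<forall>e\<in>SEa a1 s1'. c a1 s1' e \<ge> \<bar>mm p a1 s1' e - (\<Sum>k\<in>Is s1'. lam a1 s1' k * pmf (bk k) e)\<bar>"
          unfolding mm_unf using C2 by blast
        moreover have "\<forall>k\<in>Is s1'. lam a1 s1' k \<ge> 0" using C4 by blast
        moreover have "(\<Sum>k\<in>Is s1'. lam a1 s1' k) = MM p a1 s1'" using C3[rule_format, of a1 s1'] LPsum[of p a1 s1'] by simp
        ultimately show ?thesis unfolding HS_def by blast
      qed
      have Gle: "Gp p a1 \<le> v" for a1
      proof -
        have "(\<Sum>s1'\<in>UNIV. HH p a1 s1') \<le> (\<Sum>s1'\<in>UNIV. (\<Sum>k\<in>Is s1'. lam a1 s1' k * y k) + W * (\<Sum>e'\<in>SEa a1 s1'. c a1 s1' e'))"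
          unfolding HH_def by (intro sum_mono cInf_lower[OF mem HS_bdd[OF finIs W0]])
        then have "Gp p a1 \<le> Lin nb \<kappa> sE p (\<lambda>e a2. r (s1, e) (a1, a2)) + \<beta> * (\<Sum>s1'\<in>UNIV. (\<Sum>k\<in>Is s1'. lam a1 s1' k * y k) + W * (\<Sum>e'\<in>SEa a1 s1'. c a1 s1' e'))"
          unfolding Gp_def using \<beta>_pos by simp
        then show ?thesis using C1[rule_format, of a1] unfolding ObjEq by linarith
      qed
      have "Max (range (Gp p)) \<le> v" using Gle by simp
      then show "\<exists>b\<in>(\<lambda>p. Max (range (Gp p))) ` PP. b \<le> a" using pP av by blast
    qed
    show "\<forall>b\<in>(\<lambda>p. Max (range (Gp p))) ` PP. \<forall>\<epsilon>>0. \<exists>a\<in>LPSET. a \<le> b + \<epsilon>"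
    proof (intro ballI allI impI)
      fix b and \<epsilon> :: real assume bB: "b \<in> (\<lambda>p. Max (range (Gp p))) ` PP" and ep: "\<epsilon> > 0"
      then obtain p where pP: "p \<in> PP" and bp: "b = Max (range (Gp p))" by blast
      define N where "N = real CARD('loc \<times> 'per)"
      define \<epsilon>' where "\<epsilon>' = \<epsilon> / (1 + \<beta> * N)"
      have Npos: "N \<ge> 0" unfolding N_def by simp
      have bN: "0 \<le> \<beta> * N" using \<beta>_pos Npos by simp
      have ep': "\<epsilon>' > 0" unfolding \<epsilon>'_def using ep bN by (intro divide_pos_pos) auto
      have ep'b: "\<beta> * N * \<epsilon>' \<le> \<epsilon>"
      proof -
        have "\<beta> * N * \<epsilon>' = \<epsilon> * (\<beta> * N / (1 + \<beta> * N))" unfolding \<epsilon>'_def by simp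
        also have "\<beta> * N / (1 + \<beta> * N) \<le> 1" using bN by simp
        then have "\<epsilon> * (\<beta> * N / (1 + \<beta> * N)) \<le> \<epsilon> * 1" using ep by (intro mult_left_mono) auto
        finally show ?thesis by simp
      qed
      define Q where "Q = (\<lambda>a1 s1' (lam :: 'k \<Rightarrow> real) (c :: real^'d \<Rightarrow> real).
          (\<Sum>k\<in>Is s1'. lam k * y k) + W * (\<Sum>e\<in>SEa a1 s1'. c e) < HH p a1 s1' + \<epsilon>'
          \<and> (\<forall>e\<in>SEa a1 s1'. c e \<ge> \<bar>mm p a1 s1' e - (\<Sum>k\<in>Is s1'. lam k * pmf (bk k) e)\<bar>)
          \<and> (\<forall>k\<in>Is s1'. lam k \<ge> 0) \<and> (\<Sum>k\<in>Is s1'. lam k) = MM p a1 s1')"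
      have ex: "\<forall>a1 s1'. \<exists>lam c. Q a1 s1' lam c"
      proof (intro allI)
        fix a1 s1'
        obtain x where x: "x \<in> HS W (Is s1') y bk (SEa a1 s1') (mm p a1 s1') (MM p a1 s1')" "x < HH p a1 s1' + \<epsilon>'"
          using cInf_less_iff[OF D9[OF pP, of s1' a1] HS_bdd[OF finIs W0], of "HH p a1 s1' + \<epsilon>'"] ep' unfolding HH_def by auto
        then show "\<exists>lam c. Q a1 s1' lam c"
          unfolding HS_def Q_def by blast
      qed
      have "\<exists>lamF. \<forall>a1 s1'. \<exists>c. Q a1 s1' (lamF a1 s1') c"
      proof -
        have "\<forall>a1. \<exists>lf. \<forall>s1'. \<exists>c. Q a1 s1' (lf s1') c" using ex by (metis choice)
        then show ?thesis by (metis choice)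
      qed
      then obtain lamF where lF: "\<forall>a1 s1'. \<exists>c. Q a1 s1' (lamF a1 s1') c" by blast
      have "\<exists>cF. \<forall>a1 s1'. Q a1 s1' (lamF a1 s1') (cF a1 s1')"
      proof -
        have "\<forall>a1. \<exists>cf. \<forall>s1'. Q a1 s1' (lamF a1 s1') (cf s1')" using lF by (metis choice)
        then show ?thesis by (metis choice)
      qed
      then obtain cF where QF: "\<forall>a1 s1'. Q a1 s1' (lamF a1 s1') (cF a1 s1')" by blast
      have F: "\<forall>a1 s1'. (\<Sum>k\<in>Is s1'. lamF a1 s1' k * y k) + W * (\<Sum>e\<in>SEa a1 s1'. cF a1 s1' e) < HH p a1 s1' + \<epsilon>'
          \<and> (\<forall>e\<in>SEa a1 s1'. cF a1 s1' e \<ge> \<bar>mm p a1 s1' e - (\<Sum>k\<in>Is s1'. lamF a1 s1' k * pmf (bk k) e)\<bar>)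
          \<and> (\<forall>k\<in>Is s1'. lamF a1 s1' k \<ge> 0) \<and> (\<Sum>k\<in>Is s1'. lamF a1 s1' k) = MM p a1 s1'"
        using QF unfolding Q_def by blast
      have C1: "b + \<epsilon> \<ge> (\<Sum>i=1..nb. \<Sum>a2\<in>UNIV. \<kappa> i * p i a2 * r (s1, sE i) (a1, a2))
                        + \<beta> * (\<Sum>s1'\<in>UNIV. \<Sum>k\<in>Is s1'. lamF a1 s1' k * y k)
                        + \<beta> * (U - L) / 2 * (\<Sum>s1'\<in>UNIV. \<Sum>e'\<in>SEa a1 s1'. cF a1 s1' e')" for a1
      proof -
        have "(\<Sum>s1'\<in>UNIV. (\<Sum>k\<in>Is s1'. lamF a1 s1' k * y k) + W * (\<Sum>e'\<in>SEa a1 s1'. cF a1 s1' e'))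
            \<le> (\<Sum>s1'\<in>UNIV. HH p a1 s1' + \<epsilon>')"
        proof (rule sum_mono)
          fix s1'
          have "(\<Sum>k\<in>Is s1'. lamF a1 s1' k * y k) + W * (\<Sum>e\<in>SEa a1 s1'. cF a1 s1' e) < HH p a1 s1' + \<epsilon>'"
            using F by blast
          then show "(\<Sum>k\<in>Is s1'. lamF a1 s1' k * y k) + W * (\<Sum>e'\<in>SEa a1 s1'. cF a1 s1' e') \<le> HH p a1 s1' + \<epsilon>'"
            by simp
        qed
        also have "\<dots> = (\<Sum>s1'\<in>UNIV. HH p a1 s1') + N * \<epsilon>'" unfolding N_def by (simp add: sum.distrib)
        finally have le1: "(\<Sum>s1'\<in>UNIV. (\<Sum>k\<in>Is s1'. lamF a1 s1' k * y k) + W * (\<Sum>e'\<in>SEa a1 s1'. cF a1 s1' e'))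
            \<le> (\<Sum>s1'\<in>UNIV. HH p a1 s1') + N * \<epsilon>'" .
        have "\<beta> * (\<Sum>s1'\<in>UNIV. (\<Sum>k\<in>Is s1'. lamF a1 s1' k * y k) + W * (\<Sum>e'\<in>SEa a1 s1'. cF a1 s1' e'))
            \<le> \<beta> * ((\<Sum>s1'\<in>UNIV. HH p a1 s1') + N * \<epsilon>')"
          using \<beta>_pos le1 by (intro mult_left_mono) auto
        then have "\<beta> * (\<Sum>s1'\<in>UNIV. (\<Sum>k\<in>Is s1'. lamF a1 s1' k * y k) + W * (\<Sum>e'\<in>SEa a1 s1'. cF a1 s1' e'))
            \<le> \<beta> * (\<Sum>s1'\<in>UNIV. HH p a1 s1') + \<beta> * N * \<epsilon>'"
          by (simp add: distrib_left mult.assoc)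
        moreover have "Gp p a1 \<le> b" unfolding bp by simp
        ultimately show ?thesis unfolding ObjEq using ep'b unfolding Gp_def by linarith
      qed
      have "b + \<epsilon> \<in> LPSET"
        unfolding LPSET_def
      proof (rule CollectI, rule exI[of _ "b + \<epsilon>"], rule exI[of _ cF], rule exI[of _ lamF], rule exI[of _ p], intro conjI)
        show "\<forall>a1 s1'. \<forall>e'\<in>SEa a1 s1'. cF a1 s1' e' \<ge>
                  \<bar>(\<Sum>i=1..nb. \<Sum>a2\<in>UNIV. \<kappa> i * p i a2 * \<delta> (s1, sE i) (a1, a2) s1' e')
                   - (\<Sum>k\<in>Is s1'. lamF a1 s1' k * pmf (bk k) e')\<bar>"
          using F unfolding mm_unf by blast
        show "\<forall>a1 s1'. (\<Sum>k\<in>Is s1'. lamF a1 s1' k) =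
                  (\<Sum>i=1..nb. \<Sum>a2\<in>UNIV. \<Sum>\<^sub>\<infinity>e''\<in>SE. \<kappa> i * p i a2 * \<delta> (s1, sE i) (a1, a2) s1' e'')"
          using F LPsum by simp
        show "\<forall>a1 s1'. \<forall>k\<in>Is s1'. lamF a1 s1' k \<ge> 0" using F by blast
        show "\<forall>i\<in>{1..nb}. \<forall>a2. p i a2 \<ge> 0" using pP unfolding PP_def PS_def by blast
        show "\<forall>i\<in>{1..nb}. (\<Sum>a2\<in>UNIV. p i a2) = 1" using pP unfolding PP_def PS_def by blast
      qed (rule refl, intro allI C1)
      then show "\<exists>a\<in>LPSET. a \<le> b + \<epsilon>" by blast
    qed
    show "bdd_below ((\<lambda>p. Max (range (Gp p))) ` PP)"
    proof (rule bdd_belowI2[where m="- BB"])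
      fix p assume pP: "p \<in> PP"
      obtain a0 :: 'a1 where True by simp
      have "\<bar>Bf a0\<bar> \<le> BB" unfolding BB_def by (intro member_le_sum) auto
      moreover have "Bf a0 \<le> Gp p a0" by (rule D10[OF pP])
      moreover have "Gp p a0 \<le> Max (range (Gp p))" by simp
      ultimately show "- BB \<le> Max (range (Gp p))" by linarith
    qed
    show "(\<lambda>p. Max (range (Gp p))) ` PP \<noteq> {}" using D12 by simp
  qed
  show ?thesis using part1 TopEq LPeq unfolding LPSET_def by simp
qed

end
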